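(* Let $G$ be a hypo-unique domination graph of order $n$. Then $1\leq \gamma(G)\leq \lfloor 2n/5\rfloor+1$. Furthermore: (i) $\gamma(G)=1$ if and only if $G=K_2$; (ii) $\gamma(G)=2$ if and only if $n\geq 4$ is even and $G$ is the complete graph $K_n$ minus a perfect matching; (iii) $\gamma(G)=\lfloor 2n/5\rfloor+1$ if and only if $G\in\{K_2,C_4,C_7\}$.
   Context: All graphs are finite, simple and undirected. A set $D\subseteq V(G)$ is dominating if every vertex of $G$ not in $D$ has a neighbor in $D$; $\gamma(G)$ is the minimum size of a dominating set, and a dominating set of size $\gamma(G)$ is a $\gamma$-set. $G$ is a hypo-unique domination graph if $G$ has at least two $\gamma$-sets but for every $v\in V(G)$ the graph $G-v$ has exactly one $\gamma$-set. $C_m$ denotes the cycle on $m$ vertices. *)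

theory Defs
  imports Main
begin

definition graph :: "'a set \<Rightarrow> ('a \<Rightarrow> 'a \<Rightarrow> bool) \<Rightarrow> bool" where
  "graph V E \<longleftrightarrow> finite V \<and> (\<forall>x y. E x y \<longrightarrow> E y x) \<and> (\<forall>x. \<not> E x x)
      \<and> (\<forall>x y. E x y \<longrightarrow> x \<in> V \<and> y \<in> V)"

definition dominating :: "'a set \<Rightarrow> ('a \<Rightarrow> 'a \<Rightarrow> bool) \<Rightarrow> 'a set \<Rightarrow> bool" where
  "dominating V E D \<longleftrightarrow> D \<subseteq> V \<and> (\<forall>v\<in>V - D. \<exists>u\<in>D. E v u)"

definition gamma :: "'a set \<Rightarrow> ('a \<Rightarrow> 'a \<Rightarrow> bool) \<Rightarrow> nat" where
  "gamma V E = (LEAST k. \<exists>D. dominating V E D \<and> card D = k)"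

definition gamma_set :: "'a set \<Rightarrow> ('a \<Rightarrow> 'a \<Rightarrow> bool) \<Rightarrow> 'a set \<Rightarrow> bool" where
  "gamma_set V E D \<longleftrightarrow> dominating V E D \<and> card D = gamma V E"

definition del_vertex_edges :: "'a set \<Rightarrow> ('a \<Rightarrow> 'a \<Rightarrow> bool) \<Rightarrow> 'a \<Rightarrow> 'a \<Rightarrow> 'a \<Rightarrow> bool" where
  "del_vertex_edges V E v = (\<lambda>x y. E x y \<and> x \<in> V - {v} \<and> y \<in> V - {v})"

definition hypo_unique :: "'a set \<Rightarrow> ('a \<Rightarrow> 'a \<Rightarrow> bool) \<Rightarrow> bool" where
  "hypo_unique V E \<longleftrightarrow>
     (\<exists>D1 D2. gamma_set V E D1 \<and> gamma_set V E D2 \<and> D1 \<noteq> D2) \<and>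
     (\<forall>v\<in>V. \<exists>!D. gamma_set (V - {v}) (del_vertex_edges V E v) D)"

definition graph_iso :: "'a set \<Rightarrow> ('a \<Rightarrow> 'a \<Rightarrow> bool) \<Rightarrow> 'b set \<Rightarrow> ('b \<Rightarrow> 'b \<Rightarrow> bool) \<Rightarrow> bool" where
  "graph_iso V E W F \<longleftrightarrow> (\<exists>f. bij_betw f V W \<and> (\<forall>x\<in>V. \<forall>y\<in>V. E x y \<longleftrightarrow> F (f x) (f y)))"

definition complete_adj :: "nat \<Rightarrow> nat \<Rightarrow> nat \<Rightarrow> bool" where
  "complete_adj m i j \<longleftrightarrow> i < m \<and> j < m \<and> i \<noteq> j"

text \<open>Cycle C_m on {0..<m} (for m \<ge> 3).\<close>
definition cycle_adj :: "nat \<Rightarrow> nat \<Rightarrow> nat \<Rightarrow> bool" where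
  "cycle_adj m i j \<longleftrightarrow> i < m \<and> j < m \<and> (j = (i + 1) mod m \<or> i = (j + 1) mod m)"

text \<open>K_m minus the perfect matching {{0,1},{2,3},...} on {0..<m} (m even).\<close>
definition cocktail_adj :: "nat \<Rightarrow> nat \<Rightarrow> nat \<Rightarrow> bool" where
  "cocktail_adj m i j \<longleftrightarrow> i < m \<and> j < m \<and> i \<noteq> j \<and> i div 2 \<noteq> j div 2"

end

theory Submission
  imports Defs
begin


section \<open>Generic domination facts\<close>

lemma dom_subset: "dominating W E D \<Longrightarrow> D \<subseteq> W"
  by (simp add: dominating_def)

lemma dom_finite: "finite W \<Longrightarrow> dominating W E D \<Longrightarrow> finite D"
  by (metis dom_subset finite_subset)

lemma gamma_le:
  assumes "finite W" "dominating W E D"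
  shows "gamma W E \<le> card D"
  unfolding gamma_def by (rule Least_le) (use assms in blast)

lemma gamma_ex:
  assumes "finite W"
  shows "\<exists>D. dominating W E D \<and> card D = gamma W E"
proof -
  have "dominating W E W" by (simp add: dominating_def)
  then have "\<exists>k D. dominating W E D \<and> card D = k" by blast
  then show ?thesis unfolding gamma_def
    by (rule LeastI_ex[where P="\<lambda>k. \<exists>D. dominating W E D \<and> card D = k"])
qed

lemma gamma_set_ex: "finite W \<Longrightarrow> \<exists>D. gamma_set W E D"
  unfolding gamma_set_def using gamma_ex by blast

lemma gamma_setI:
  "finite W \<Longrightarrow> dominating W E D \<Longrightarrow> card D \<le> gamma W E \<Longrightarrow> gamma_set W E D"
  using gamma_le[of W E D] unfolding gamma_set_def by simp

lemma gamma_le_card: "finite W \<Longrightarrow> gamma W E \<le> card W"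
  by (rule gamma_le) (auto simp: dominating_def)

lemma gamma_set_subset: "gamma_set W E D \<Longrightarrow> D \<subseteq> W"
  by (simp add: gamma_set_def dominating_def)

lemma gamma_set_finite: "finite W \<Longrightarrow> gamma_set W E D \<Longrightarrow> finite D"
  by (metis gamma_set_subset finite_subset)

lemma gamma_set_card: "gamma_set W E D \<Longrightarrow> card D = gamma W E"
  by (simp add: gamma_set_def)

lemma gamma_set_dom: "gamma_set W E D \<Longrightarrow> dominating W E D"
  by (simp add: gamma_set_def)

lemma gamma_zero:
  assumes "finite W" "gamma W E = 0" shows "W = {}"
proof -
  obtain D where D: "dominating W E D" "card D = 0" using gamma_ex[OF assms(1), of E] assms(2) by auto
  have "finite D" using dom_finite[OF assms(1) D(1)] .
  then have "D = {}" using D(2) by simp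
  then show ?thesis using D(1) by (auto simp: dominating_def)
qed

lemma gamma_pos: "finite W \<Longrightarrow> W \<noteq> {} \<Longrightarrow> 1 \<le> gamma W E"
  using gamma_zero[of W E] by fastforce

lemma dom_del: "v \<notin> D \<Longrightarrow> dominating W E D \<Longrightarrow> dominating (W - {v}) E D"
  by (auto simp: dominating_def)

lemma dom_add: "dominating (W - {v}) E D \<Longrightarrow> v \<in> W \<Longrightarrow> dominating W E (insert v D)"
  by (auto simp: dominating_def)

lemma del_edges_dom:
  "dominating (V - {v}) (del_vertex_edges V E v) D \<longleftrightarrow> dominating (V - {v}) E D"
  by (auto simp: dominating_def del_vertex_edges_def)

lemma del_edges_gamma: "gamma (V - {v}) (del_vertex_edges V E v) = gamma (V - {v}) E"
  unfolding gamma_def del_edges_dom ..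

lemma del_edges_gamma_set:
  "gamma_set (V - {v}) (del_vertex_edges V E v) D \<longleftrightarrow> gamma_set (V - {v}) E D"
  unfolding gamma_set_def del_edges_gamma del_edges_dom ..

lemma dom_drop_leaf:
  assumes "dominating W E D" "l \<in> D" "w \<in> D" "w \<noteq> l" "E l w" "\<forall>z. E z l \<longrightarrow> z = w"
  shows "dominating W E (D - {l})"
  unfolding dominating_def
proof (intro conjI ballI)
  show "D - {l} \<subseteq> W" using assms(1) by (auto simp: dominating_def)
next
  fix z assume z: "z \<in> W - (D - {l})"
  show "\<exists>u\<in>D - {l}. E z u"
  proof (cases "z = l")
    case True then show ?thesis using assms(3,4,5) by auto
  next
    case False
    then have "z \<in> W - D" using z by auto
    then obtain u where u: "u \<in> D" "E z u" using assms(1) by (auto simp: dominating_def)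
    have "u \<noteq> l" using u assms(6) \<open>z \<in> W - D\<close> assms(3) by auto
    then show ?thesis using u by auto
  qed
qed

lemma dom_swap_leaf:
  assumes "dominating W E D" "y \<in> D" "w \<in> W" "w \<notin> D" "E y w" "\<forall>z. E z y \<longrightarrow> z = w"
  shows "dominating W E (insert w (D - {y}))"
  unfolding dominating_def
proof (intro conjI ballI)
  show "insert w (D - {y}) \<subseteq> W" using assms(1,3) by (auto simp: dominating_def)
next
  fix z assume z: "z \<in> W - insert w (D - {y})"
  show "\<exists>u\<in>insert w (D - {y}). E z u"
  proof (cases "z = y")
    case True then show ?thesis using assms(5) by auto
  next
    case False
    then have "z \<in> W - D" using z by auto
    then obtain u where u: "u \<in> D" "E z u" using assms(1) by (auto simp: dominating_def)
    have "u \<noteq> y" using u assms(6) z by auto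
    then show ?thesis using u by auto
  qed
qed

lemma dom_two_leaves:
  assumes "dominating W E D" "y \<in> D" "t \<in> D" "w \<in> W" "E y w" "E t w"
    "\<forall>z. E z y \<longrightarrow> z = w" "\<forall>z. E z t \<longrightarrow> z = w"
  shows "dominating W E (insert w (D - {y, t}))"
  unfolding dominating_def
proof (intro conjI ballI)
  show "insert w (D - {y, t}) \<subseteq> W" using assms(1,4) by (auto simp: dominating_def)
next
  fix z assume z: "z \<in> W - insert w (D - {y, t})"
  show "\<exists>u\<in>insert w (D - {y, t}). E z u"
  proof (cases "z = y \<or> z = t")
    case True then show ?thesis using assms(5,6) by auto
  next
    case False
    then have "z \<in> W - D" using z by auto
    then obtain u where u: "u \<in> D" "E z u" using assms(1) by (auto simp: dominating_def)
    have "u \<noteq> y" "u \<noteq> t" using u assms(7,8) z by auto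
    then show ?thesis using u by auto
  qed
qed

lemma card_insert_diff1:
  assumes "finite D" "y \<in> D" "w \<notin> D"
  shows "card (insert w (D - {y})) = card D"
proof -
  have "w \<notin> D - {y}" using assms(3) by auto
  then have "card (insert w (D - {y})) = Suc (card (D - {y}))" using assms by simp
  also have "\<dots> = card D"
  proof -
    have "card D > 0" using assms(1,2) card_gt_0_iff by blast
    then show ?thesis using assms(1,2) by (simp add: card_Diff_singleton)
  qed
  finally show ?thesis .
qed




lemma ore:
  assumes fin: "finite W" and sym: "\<forall>x y. E x y \<longrightarrow> E y x" and irr: "\<forall>x. \<not> E x x"
    and noiso: "\<forall>z\<in>W. \<exists>y\<in>W. E z y"
  shows "2 * gamma W E \<le> card W"
proof -
  obtain D where D: "dominating W E D" "card D = gamma W E" using gamma_ex[OF fin, of E] by blast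
  have DW: "D \<subseteq> W" using D(1) dom_subset by blast
  have finD: "finite D" using DW fin by (rule finite_subset)
  have "dominating W E (W - D)"
    unfolding dominating_def
  proof (intro conjI ballI)
    show "W - D \<subseteq> W" by blast
  next
    fix d assume d: "d \<in> W - (W - D)"
    then have dD: "d \<in> D" "d \<in> W" by auto
    show "\<exists>u\<in>W - D. E d u"
    proof (rule ccontr)
      assume nn: "\<not> (\<exists>u\<in>W - D. E d u)"
      obtain y where y: "y \<in> W" "E d y" using noiso dD by blast
      have yD: "y \<in> D" using nn y by blast
      have yd: "y \<noteq> d" using irr y by blast
      have "dominating W E (D - {d})"
        unfolding dominating_def
      proof (intro conjI ballI)
        show "D - {d} \<subseteq> W" using DW by blast
      next
        fix z assume z: "z \<in> W - (D - {d})"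
        show "\<exists>u\<in>D - {d}. E z u"
        proof (cases "z = d")
          case True then show ?thesis using yD yd y by blast
        next
          case False
          then have "z \<in> W - D" using z by auto
          then obtain u where u: "u \<in> D" "E z u" using D(1) by (auto simp: dominating_def)
          have "u \<noteq> d"
          proof
            assume "u = d"
            then have "E d z" using u(2) sym by blast
            then show False using nn \<open>z \<in> W - D\<close> by blast
          qed
          then show ?thesis using u by blast
        qed
      qed
      then have "gamma W E \<le> card (D - {d})" using gamma_le fin by blast
      also have "\<dots> < card D" by (rule card_Diff1_less[OF finD dD(1)])
      finally show False using D(2) by simp
    qed
  qed
  then have "gamma W E \<le> card (W - D)" using gamma_le fin by blast
  also have "\<dots> = card W - card D" using DW fin by (simp add: card_Diff_subset finD)
  finally show ?thesis using D(2) card_mono[OF fin DW] by linarith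
qed

definition epn :: "'a set \<Rightarrow> ('a \<Rightarrow> 'a \<Rightarrow> bool) \<Rightarrow> 'a set \<Rightarrow> 'a \<Rightarrow> 'a set" where
  "epn W E D d = {z \<in> W - D. E z d \<and> (\<forall>d'\<in>D. E z d' \<longrightarrow> d' = d)}"

lemma epn2:
  assumes fin: "finite W" and sym: "\<forall>x y. E x y \<longrightarrow> E y x" and irr: "\<forall>x. \<not> E x x"
    and noiso: "\<forall>z\<in>W. \<exists>y\<in>W. E z y"
    and gs: "gamma_set W E D" and un: "\<forall>D'. gamma_set W E D' \<longrightarrow> D' = D" and dD: "d \<in> D"
  shows "2 \<le> card (epn W E D d)"
proof (rule ccontr)
  assume "\<not> 2 \<le> card (epn W E D d)"
  then have c: "card (epn W E D d) \<le> 1" by simp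
  have DW: "D \<subseteq> W" using gs gamma_set_subset by blast
  have finD: "finite D" using DW fin by (rule finite_subset)
  have domD: "dominating W E D" using gs gamma_set_dom by blast
  have cD: "card D = gamma W E" using gs gamma_set_card by blast
  have finP: "finite (epn W E D d)" using fin unfolding epn_def by simp
  (* swapping d for u gives another gamma set *)
  have swap: False if u: "u \<in> W" "u \<notin> D" "E u d" "\<forall>z\<in>W - D. z \<noteq> u \<longrightarrow> z \<notin> epn W E D d" for u
  proof -
    have "dominating W E (insert u (D - {d}))"
      unfolding dominating_def
    proof (intro conjI ballI)
      show "insert u (D - {d}) \<subseteq> W" using u DW by blast
    next
      fix z assume z: "z \<in> W - insert u (D - {d})"
      show "\<exists>w\<in>insert u (D - {d}). E z w"
      proof (cases "z = d")
        case True
        have "E d u" using sym u(3) by blast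
        then show ?thesis using True by blast
      next
        case False
        then have zW: "z \<in> W - D" "z \<noteq> u" using z by auto
        then obtain w where w: "w \<in> D" "E z w" using domD by (auto simp: dominating_def)
        have "z \<notin> epn W E D d" using u(4) zW by blast
        then have "\<not> (E z d \<and> (\<forall>d'\<in>D. E z d' \<longrightarrow> d' = d))" using zW unfolding epn_def by auto
        then show ?thesis using w by (cases "w = d") auto
      qed
    qed
    moreover have "card (insert u (D - {d})) = card D" using card_insert_diff1[OF finD dD u(2)] .
    ultimately have "gamma_set W E (insert u (D - {d}))" using gamma_setI[OF fin, of E "insert u (D - {d})"] cD by simp
    then have "insert u (D - {d}) = D" using un by blast
    then show False using u(2) by blast
  qed
  show False
  proof (cases "epn W E D d = {}")
    case True
    show False
    proof (cases "\<exists>d'\<in>D. d' \<noteq> d \<and> E d d'")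
      case True
      then obtain d' where d': "d' \<in> D" "d' \<noteq> d" "E d d'" by blast
      have "dominating W E (D - {d})"
        unfolding dominating_def
      proof (intro conjI ballI)
        show "D - {d} \<subseteq> W" using DW by blast
      next
        fix z assume z: "z \<in> W - (D - {d})"
        show "\<exists>w\<in>D - {d}. E z w"
        proof (cases "z = d")
          case True then show ?thesis using d' by blast
        next
          case False
          then have zW: "z \<in> W - D" using z by auto
          then obtain w where w: "w \<in> D" "E z w" using domD by (auto simp: dominating_def)
          have "z \<notin> epn W E D d" using \<open>epn W E D d = {}\<close> by blast
          then have "\<not> (E z d \<and> (\<forall>d'\<in>D. E z d' \<longrightarrow> d' = d))" using zW unfolding epn_def by auto
          then show ?thesis using w by (cases "w = d") auto
        qed
      qed
      then have "gamma W E \<le> card (D - {d})" using gamma_le fin by blast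
      also have "\<dots> < card D" by (rule card_Diff1_less[OF finD dD])
      finally show False using cD by simp
    next
      case False
      obtain u where u: "u \<in> W" "E d u" using noiso dD DW by blast
      have "u \<notin> D"
      proof
        assume "u \<in> D"
        moreover have "u \<noteq> d" using u(2) irr by auto
        ultimately show False using False u(2) by blast
      qed
      have "E u d" using sym u(2) by blast
      moreover have "\<forall>z\<in>W - D. z \<noteq> u \<longrightarrow> z \<notin> epn W E D d" using True by blast
      ultimately show False using swap[of u] u(1) \<open>u \<notin> D\<close> by blast
    qed
  next
    case False
    have "card (epn W E D d) \<noteq> 0" using False finP by simp
    then have "card (epn W E D d) = 1" using c by simp
    then obtain u where single: "epn W E D d = {u}" using card_1_singletonE by blast
    then have uP: "u \<in> epn W E D d" by blast
    have "u \<in> W" "u \<notin> D" "E u d" using uP unfolding epn_def by auto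
    moreover have "\<forall>z\<in>W - D. z \<noteq> u \<longrightarrow> z \<notin> epn W E D d" using single by blast
    ultimately show False using swap[of u] by blast
  qed
qed

lemma epn_disj:
  assumes "d1 \<in> D" "d2 \<in> D" "d1 \<noteq> d2"
  shows "epn W E D d1 \<inter> epn W E D d2 = {}"
  using assms unfolding epn_def by auto

lemma epn_sub: "epn W E D d \<subseteq> W - D"
  unfolding epn_def by auto

lemma epn_bound:
  assumes fin: "finite W" and sym: "\<forall>x y. E x y \<longrightarrow> E y x" and irr: "\<forall>x. \<not> E x x"
    and noiso: "\<forall>z\<in>W. \<exists>y\<in>W. E z y"
    and gs: "gamma_set W E D" and un: "\<forall>D'. gamma_set W E D' \<longrightarrow> D' = D"
  shows "2 * card D \<le> card (W - D)"
proof -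
  have DW: "D \<subseteq> W" using gs gamma_set_subset by blast
  have finD: "finite D" using DW fin by (rule finite_subset)
  have "2 * card D = (\<Sum>d\<in>D. 2)" by simp
  also have "\<dots> \<le> (\<Sum>d\<in>D. card (epn W E D d))"
    by (rule sum_mono) (use epn2[OF fin sym irr noiso gs un] in blast)
  also have "\<dots> = card (\<Union>d\<in>D. epn W E D d)"
  proof (rule card_UN_disjoint[symmetric])
    show "finite D" by fact
    show "\<forall>i\<in>D. finite (epn W E D i)" using fin by (auto simp: epn_def)
    show "\<forall>i\<in>D. \<forall>j\<in>D. i \<noteq> j \<longrightarrow> epn W E D i \<inter> epn W E D j = {}" by (auto simp: epn_def)
  qed
  also have "\<dots> \<le> card (W - D)"
    by (rule card_mono) (auto simp: epn_def fin)
  finally show ?thesis .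
qed




lemma dom_split:
  assumes W: "W = S \<union> T" and disj: "S \<inter> T = {}" and ne: "\<forall>x\<in>S. \<forall>y\<in>T. \<not> E x y \<and> \<not> E y x"
  shows "dominating W E D \<longleftrightarrow> D \<subseteq> W \<and> dominating S E (D \<inter> S) \<and> dominating T E (D \<inter> T)"
proof
  assume d: "dominating W E D"
  have DW: "D \<subseteq> W" using d dom_subset by blast
  have "dominating S E (D \<inter> S)"
    unfolding dominating_def
  proof (intro conjI ballI)
    fix z assume z: "z \<in> S - D \<inter> S"
    then have "z \<in> W - D" using W by auto
    then obtain u where u: "u \<in> D" "E z u" using d by (auto simp: dominating_def)
    have "u \<notin> T" using ne z u by blast
    then have "u \<in> S" using u DW W by blast
    then show "\<exists>u\<in>D \<inter> S. E z u" using u by blast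
  qed blast
  moreover have "dominating T E (D \<inter> T)"
    unfolding dominating_def
  proof (intro conjI ballI)
    fix z assume z: "z \<in> T - D \<inter> T"
    then have "z \<in> W - D" using W by auto
    then obtain u where u: "u \<in> D" "E z u" using d by (auto simp: dominating_def)
    have "u \<notin> S" using ne z u by blast
    then have "u \<in> T" using u DW W by blast
    then show "\<exists>u\<in>D \<inter> T. E z u" using u by blast
  qed blast
  ultimately show "D \<subseteq> W \<and> dominating S E (D \<inter> S) \<and> dominating T E (D \<inter> T)" using DW by blast
next
  assume a: "D \<subseteq> W \<and> dominating S E (D \<inter> S) \<and> dominating T E (D \<inter> T)"
  show "dominating W E D"
    unfolding dominating_def
  proof (intro conjI ballI)
    show "D \<subseteq> W" using a by blast
  next
    fix z assume z: "z \<in> W - D"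
    show "\<exists>u\<in>D. E z u"
    proof (cases "z \<in> S")
      case True
      then have "z \<in> S - D \<inter> S" using z by blast
      then show ?thesis using a unfolding dominating_def by blast
    next
      case False
      then have "z \<in> T - D \<inter> T" using z W by blast
      then show ?thesis using a unfolding dominating_def by blast
    qed
  qed
qed

lemma gamma_split:
  assumes fin: "finite W" and W: "W = S \<union> T" and disj: "S \<inter> T = {}"
    and ne: "\<forall>x\<in>S. \<forall>y\<in>T. \<not> E x y \<and> \<not> E y x"
  shows "gamma W E = gamma S E + gamma T E"
proof -
  have finS: "finite S" and finT: "finite T" using fin W by auto
  obtain DS where DS: "dominating S E DS" "card DS = gamma S E" using gamma_ex[OF finS, of E] by blast
  obtain DT where DT: "dominating T E DT" "card DT = gamma T E" using gamma_ex[OF finT, of E] by blast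
  have DSS: "DS \<subseteq> S" and DTT: "DT \<subseteq> T" using DS DT dom_subset by blast+
  have "(DS \<union> DT) \<inter> S = DS" "(DS \<union> DT) \<inter> T = DT" using DSS DTT disj by auto
  then have "dominating W E (DS \<union> DT)"
    using dom_split[OF W disj ne] DS DT DSS DTT W by auto
  then have "gamma W E \<le> card (DS \<union> DT)" using gamma_le fin by blast
  also have "\<dots> = card DS + card DT"
  proof -
    have "finite DS" using DSS finS by (rule finite_subset)
    moreover have "finite DT" using DTT finT by (rule finite_subset)
    moreover have "DS \<inter> DT = {}" using DSS DTT disj by blast
    ultimately show ?thesis by (simp add: card_Un_disjoint)
  qed
  finally have le: "gamma W E \<le> gamma S E + gamma T E" using DS DT by simp
  obtain D where D: "dominating W E D" "card D = gamma W E" using gamma_ex[OF fin, of E] by blast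
  have sp: "D \<subseteq> W" "dominating S E (D \<inter> S)" "dominating T E (D \<inter> T)"
    using dom_split[OF W disj ne] D(1) by auto
  have "gamma S E + gamma T E \<le> card (D \<inter> S) + card (D \<inter> T)"
    using gamma_le[OF finS sp(2)] gamma_le[OF finT sp(3)] by simp
  also have "\<dots> = card D"
  proof -
    have "D = (D \<inter> S) \<union> (D \<inter> T)" using sp(1) W by blast
    moreover have "finite D" using sp(1) fin by (rule finite_subset)
    ultimately show ?thesis using disj
      by (metis card_Un_disjoint finite_Int inf_assoc inf_bot_right inf_commute inf_left_commute)
  qed
  finally show ?thesis using le D(2) by simp
qed

lemma gamma_set_split:
  assumes fin: "finite W" and W: "W = S \<union> T" and disj: "S \<inter> T = {}"
    and ne: "\<forall>x\<in>S. \<forall>y\<in>T. \<not> E x y \<and> \<not> E y x" and DW: "D \<subseteq> W"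
  shows "gamma_set W E D \<longleftrightarrow> gamma_set S E (D \<inter> S) \<and> gamma_set T E (D \<inter> T)"
proof -
  have finS: "finite S" and finT: "finite T" using fin W by auto
  have finD: "finite D" using DW fin by (rule finite_subset)
  have cD: "card D = card (D \<inter> S) + card (D \<inter> T)"
  proof -
    have "D = (D \<inter> S) \<union> (D \<inter> T)" using DW W by blast
    then show ?thesis using disj finD
      by (metis card_Un_disjoint finite_Int inf_assoc inf_bot_right inf_commute inf_left_commute)
  qed
  have g: "gamma W E = gamma S E + gamma T E" using gamma_split[OF fin W disj ne] .
  show ?thesis
  proof
    assume a: "gamma_set W E D"
    have sp: "dominating S E (D \<inter> S)" "dominating T E (D \<inter> T)"
      using dom_split[OF W disj ne] a by (auto simp: gamma_set_def)
    have "gamma S E \<le> card (D \<inter> S)" "gamma T E \<le> card (D \<inter> T)"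
      using gamma_le[OF finS sp(1)] gamma_le[OF finT sp(2)] by auto
    moreover have "card D = gamma W E" using a gamma_set_card by blast
    ultimately show "gamma_set S E (D \<inter> S) \<and> gamma_set T E (D \<inter> T)"
      using sp cD g unfolding gamma_set_def by linarith
  next
    assume a: "gamma_set S E (D \<inter> S) \<and> gamma_set T E (D \<inter> T)"
    then have "dominating W E D" using dom_split[OF W disj ne] DW by (auto simp: gamma_set_def)
    moreover have "card D = gamma W E" using a cD g by (simp add: gamma_set_def)
    ultimately show "gamma_set W E D" by (simp add: gamma_set_def)
  qed
qed




locale hu =
  fixes V :: "'a set" and E :: "'a \<Rightarrow> 'a \<Rightarrow> bool"
  assumes G: "graph V E" and HU: "hypo_unique V E"
begin

lemma finV: "finite V" using G unfolding graph_def by blast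
lemma symE: "E x y \<Longrightarrow> E y x" using G unfolding graph_def by blast
lemma irrE: "\<not> E x x" using G unfolding graph_def by blast
lemma edgeV: "E x y \<Longrightarrow> x \<in> V" "E x y \<Longrightarrow> y \<in> V" using G unfolding graph_def by blast+
lemma symE': "\<forall>x y. E x y \<longrightarrow> E y x" using symE by blast
lemma irrE': "\<forall>x. \<not> E x x" using irrE by blast

lemma uniq: "v \<in> V \<Longrightarrow> \<exists>!D. gamma_set (V - {v}) E D"
proof -
  assume "v \<in> V"
  then have "\<exists>!D. gamma_set (V - {v}) (del_vertex_edges V E v) D" using HU unfolding hypo_unique_def by blast
  then show ?thesis unfolding del_edges_gamma_set .
qed

lemma uniq_eq: "v \<in> V \<Longrightarrow> gamma_set (V - {v}) E D1 \<Longrightarrow> gamma_set (V - {v}) E D2 \<Longrightarrow> D1 = D2"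
  using uniq by blast

lemma two: "\<exists>D1 D2. gamma_set V E D1 \<and> gamma_set V E D2 \<and> D1 \<noteq> D2"
  using HU unfolding hypo_unique_def by blast

lemma g_pos: "1 \<le> gamma V E"
proof (rule ccontr)
  assume "\<not> 1 \<le> gamma V E"
  then have "V = {}" using gamma_zero[OF finV, of E] by simp
  then show False using two gamma_set_subset by blast
qed

lemma g_lt: "gamma V E < card V"
proof (rule ccontr)
  assume "\<not> gamma V E < card V"
  then have eq: "gamma V E = card V" using gamma_le_card[OF finV, of E] by simp
  have "gamma_set V E D \<Longrightarrow> D = V" for D
  proof -
    assume a: "gamma_set V E D"
    have "D \<subseteq> V" using gamma_set_subset[OF a] .
    moreover have "card D = card V" using gamma_set_card[OF a] eq by simp
    ultimately show "D = V" using card_subset_eq[OF finV] by blast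
  qed
  then show False using two by blast
qed

lemma cardV2: "2 \<le> card V" using g_lt g_pos by linarith

lemma gdel: assumes "v \<in> V" shows "gamma V E \<le> gamma (V - {v}) E + 1"
proof -
  obtain D where D: "dominating (V - {v}) E D" "card D = gamma (V - {v}) E"
    using gamma_ex[of "V - {v}" E] finV by auto
  have "dominating V E (insert v D)" using dom_add[OF D(1) assms] .
  then have "gamma V E \<le> card (insert v D)" by (rule gamma_le[OF finV])
  also have "\<dots> \<le> card D + 1"
  proof -
    have "finite D" using dom_finite[OF _ D(1)] finV by simp
    then show ?thesis by (simp add: card_insert_if)
  qed
  finally show ?thesis using D(2) by simp
qed

lemma gsetV: "gamma_set V E D \<Longrightarrow> D \<subseteq> V" by (rule gamma_set_subset)
lemma gsetfin: "gamma_set V E D \<Longrightarrow> finite D" by (rule gamma_set_finite[OF finV])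

lemma to_del:
  assumes "v \<in> V" "gamma V E \<le> gamma (V - {v}) E" "dominating V E D" "card D = gamma V E" "v \<notin> D"
  shows "gamma_set (V - {v}) E D"
proof -
  have d: "dominating (V - {v}) E D" by (rule dom_del[OF assms(5,3)])
  have f: "finite (V - {v})" using finV by simp
  have c: "card D \<le> gamma (V - {v}) E" using assms(2,4) by simp
  show ?thesis by (rule gamma_setI[OF f d c])
qed

lemma fact1:
  assumes "v \<in> V" "gamma V E \<le> gamma (V - {v}) E" "gamma_set V E D1" "gamma_set V E D2"
    "v \<notin> D1" "v \<notin> D2"
  shows "D1 = D2"
proof -
  have "gamma_set (V - {v}) E D1"
    by (rule to_del[OF assms(1,2) gamma_set_dom[OF assms(3)] gamma_set_card[OF assms(3)] assms(5)])
  moreover have "gamma_set (V - {v}) E D2"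
    by (rule to_del[OF assms(1,2) gamma_set_dom[OF assms(4)] gamma_set_card[OF assms(4)] assms(6)])
  ultimately show ?thesis by (rule uniq_eq[OF assms(1)])
qed

lemma conn_aux:
  assumes VST: "V = S \<union> T" and disj: "S \<inter> T = {}" and ne: "\<forall>x\<in>S. \<forall>y\<in>T. \<not> E x y \<and> \<not> E y x"
    and tT: "t \<in> T" and g1: "gamma_set V E D1" and g2: "gamma_set V E D2" and d: "D1 \<inter> S \<noteq> D2 \<inter> S"
  shows False
proof -
  have W': "V - {t} = S \<union> (T - {t})" using VST disj tT by blast
  have disj': "S \<inter> (T - {t}) = {}" using disj by blast
  have ne': "\<forall>x\<in>S. \<forall>y\<in>T - {t}. \<not> E x y \<and> \<not> E y x" using ne by blast
  have fin': "finite (V - {t})" using finV by blast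
  have finT: "finite (T - {t})" using finV VST by auto
  obtain X where X: "gamma_set (T - {t}) E X" using gamma_set_ex[OF finT] by blast
  have XT: "X \<subseteq> T - {t}" using X gamma_set_subset by blast
  have gs: "gamma_set S E (D \<inter> S)" if "gamma_set V E D" for D
    using gamma_set_split[OF finV VST disj ne] that gsetV by blast
  have Y: "gamma_set (V - {t}) E ((D \<inter> S) \<union> X)" if "gamma_set V E D" for D
  proof -
    have sub: "(D \<inter> S) \<union> X \<subseteq> V - {t}" using XT W' by blast
    have "((D \<inter> S) \<union> X) \<inter> S = D \<inter> S" "((D \<inter> S) \<union> X) \<inter> (T - {t}) = X"
      using XT disj by auto
    then show ?thesis using gamma_set_split[OF fin' W' disj' ne' sub] gs[OF that] X by simp
  qed
  have tV: "t \<in> V" using tT VST by blast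
  have "(D1 \<inter> S) \<union> X = (D2 \<inter> S) \<union> X" using uniq_eq[OF tV Y[OF g1] Y[OF g2]] .
  then have "((D1 \<inter> S) \<union> X) \<inter> S = ((D2 \<inter> S) \<union> X) \<inter> S" by simp
  moreover have "\<And>D. ((D \<inter> S) \<union> X) \<inter> S = D \<inter> S" using XT disj by blast
  ultimately show False using d by simp
qed

lemma conn:
  assumes SV: "S \<subseteq> V" and Sne: "S \<noteq> {}" and cl: "\<forall>x\<in>S. \<forall>y. E x y \<longrightarrow> y \<in> S"
  shows "S = V"
proof (rule ccontr)
  assume "S \<noteq> V"
  define T where "T = V - S"
  have Tne: "T \<noteq> {}" using SV \<open>S \<noteq> V\<close> T_def by blast
  have VST: "V = S \<union> T" "V = T \<union> S" using SV T_def by auto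
  have disj: "S \<inter> T = {}" "T \<inter> S = {}" using T_def by auto
  have ne: "\<forall>x\<in>S. \<forall>y\<in>T. \<not> E x y \<and> \<not> E y x" using cl symE T_def by blast
  then have ne2: "\<forall>x\<in>T. \<forall>y\<in>S. \<not> E x y \<and> \<not> E y x" by blast
  obtain D1 D2 where D: "gamma_set V E D1" "gamma_set V E D2" "D1 \<noteq> D2" using two by blast
  have "D1 = (D1 \<inter> S) \<union> (D1 \<inter> T)" "D2 = (D2 \<inter> S) \<union> (D2 \<inter> T)"
    using gsetV[OF D(1)] gsetV[OF D(2)] VST by blast+
  then have "D1 \<inter> S \<noteq> D2 \<inter> S \<or> D1 \<inter> T \<noteq> D2 \<inter> T" using D(3) by metis
  then show False
  proof
    assume "D1 \<inter> S \<noteq> D2 \<inter> S"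
    obtain t where "t \<in> T" using Tne by blast
    then show False using conn_aux[OF VST(1) disj(1) ne _ D(1,2)] \<open>D1 \<inter> S \<noteq> D2 \<inter> S\<close> by blast
  next
    assume "D1 \<inter> T \<noteq> D2 \<inter> T"
    obtain s where "s \<in> S" using Sne by blast
    then show False using conn_aux[OF VST(2) disj(2) ne2 _ D(1,2)] \<open>D1 \<inter> T \<noteq> D2 \<inter> T\<close> by blast
  qed
qed

lemma noiso: assumes "x \<in> V" shows "\<exists>y. E x y"
proof (rule ccontr)
  assume "\<not> (\<exists>y. E x y)"
  then have "{x} = V" using conn[of "{x}"] assms by auto
  then show False using cardV2 by auto
qed

lemma noisoV: "\<forall>z\<in>V. \<exists>y\<in>V. E z y" using noiso edgeV by blast

end



context hu begin

definition Bset :: "'a set" where "Bset = {v \<in> V. gamma V E \<le> gamma (V - {v}) E}"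

abbreviation leafat :: "'a \<Rightarrow> 'a \<Rightarrow> bool" where
  "leafat z w \<equiv> E z w \<and> (\<forall>y. E z y \<longrightarrow> y = w)"

lemma notB: assumes "x \<in> V" "x \<notin> Bset" shows "gamma (V - {x}) E = gamma V E - 1"
  using gdel[OF assms(1)] assms g_pos unfolding Bset_def by auto

lemma gs_del:
  assumes "v \<in> Bset" "dominating (V - {v}) E D" "card D \<le> gamma V E"
  shows "gamma_set (V - {v}) E D"
  using assms gamma_setI[of "V - {v}" E D] finV unfolding Bset_def by auto

lemma gs_V: "dominating V E D \<Longrightarrow> card D \<le> gamma V E \<Longrightarrow> gamma_set V E D"
  by (rule gamma_setI[OF finV])

lemma less_gamma: "dominating V E D \<Longrightarrow> card D < gamma V E \<Longrightarrow> False"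
  using gamma_le finV by fastforce

lemma Dx_props:
  assumes x: "x \<in> V" "x \<notin> Bset" and Dx: "gamma_set (V - {x}) E Dx"
  shows "card Dx = gamma V E - 1" "Dx \<subseteq> V - {x}" "finite Dx" "\<forall>u\<in>Dx. \<not> E x u"
    "dominating (V - {x}) E Dx"
proof -
  show c: "card Dx = gamma V E - 1" using Dx gamma_set_card notB[OF x] by metis
  show s: "Dx \<subseteq> V - {x}" using Dx gamma_set_subset by blast
  show f: "finite Dx" using s finV by (rule finite_subset[OF _ finite_Diff])
  show d: "dominating (V - {x}) E Dx" using Dx gamma_set_dom by blast
  show "\<forall>u\<in>Dx. \<not> E x u"
  proof (intro ballI notI)
    fix u assume "u \<in> Dx" "E x u"
    then have "dominating V E Dx" using d x(1) s unfolding dominating_def by auto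
    then show False using less_gamma c g_pos by (metis diff_less zero_less_one less_le_trans)
  qed
qed

lemma fact2:
  assumes v: "v \<in> Bset" and x: "x \<in> V" "x \<notin> Bset" and xv: "E x v"
    and Dx: "gamma_set (V - {x}) E Dx"
  shows "\<forall>y. E x y \<longrightarrow> y = v" "v \<notin> Dx" "x \<notin> Dx"
    "gamma_set V E (insert x Dx)" "gamma_set V E (insert v Dx)"
proof -
  note P = Dx_props[OF x Dx]
  show vD: "v \<notin> Dx" using P(4) xv by blast
  show xD: "x \<notin> Dx" using P(2) by blast
  have vV: "v \<in> V" using v Bset_def by blast
  have cins: "card (insert y Dx) = gamma V E" if "y \<notin> Dx" for y
    using that P(1,3) g_pos by simp
  have gy: "gamma_set (V - {v}) E (insert y Dx)" if y: "y = x \<or> E x y" "y \<noteq> v" for y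
  proof -
    have yV: "y \<in> V" using y x edgeV by blast
    have yD: "y \<notin> Dx" using y P(4) xD by blast
    have "dominating (V - {v}) E (insert y Dx)"
      unfolding dominating_def
    proof (intro conjI ballI)
      show "insert y Dx \<subseteq> V - {v}" using yV y(2) P(2) vD by blast
    next
      fix z assume z: "z \<in> V - {v} - insert y Dx"
      show "\<exists>u\<in>insert y Dx. E z u"
      proof (cases "z = x")
        case True then show ?thesis using y z by auto
      next
        case False
        then have "z \<in> V - {x} - Dx" using z by blast
        then show ?thesis using P(5) unfolding dominating_def by blast
      qed
    qed
    then show ?thesis using gs_del[OF v] cins[OF yD] by simp
  qed
  show "\<forall>y. E x y \<longrightarrow> y = v"
  proof (intro allI impI)
    fix y assume xy: "E x y"
    show "y = v"
    proof (rule ccontr)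
      assume "y \<noteq> v"
      have "x \<noteq> v" using xv irrE by blast
      have "insert x Dx = insert y Dx" using uniq_eq[OF vV gy[of x] gy[of y]] xy \<open>y \<noteq> v\<close> \<open>x \<noteq> v\<close> by blast
      then have "x = y" using xD by blast
      then show False using xy irrE by blast
    qed
  qed
  have domins: "dominating V E (insert y Dx)" if "y = x \<or> y = v" for y
    unfolding dominating_def
  proof (intro conjI ballI)
    show "insert y Dx \<subseteq> V" using that x vV P(2) by blast
  next
    fix z assume z: "z \<in> V - insert y Dx"
    show "\<exists>u\<in>insert y Dx. E z u"
    proof (cases "z = x")
      case True then show ?thesis using that z xv by auto
    next
      case False
      then have "z \<in> V - {x} - Dx" using z by blast
      then show ?thesis using P(5) unfolding dominating_def by blast
    qed
  qed
  show "gamma_set V E (insert x Dx)" using gs_V[OF domins[of x]] cins[OF xD] by simp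
  show "gamma_set V E (insert v Dx)" using gs_V[OF domins[of v]] cins[OF vD] by simp
qed

lemma exDx: "x \<in> V \<Longrightarrow> \<exists>Dx. gamma_set (V - {x}) E Dx"
  using gamma_set_ex finV by blast

lemma pair_half:
  assumes vV: "v \<in> V" and a: "a \<in> V - {v}" and b: "b \<in> V - {v}" and ab: "leafat a b" and ba: "leafat b a"
    and D: "gamma_set (V - {v}) E D" and aD: "a \<in> D"
  shows False
proof -
  have fin: "finite (V - {v})" using finV by blast
  have dD: "dominating (V - {v}) E D" using D gamma_set_dom by blast
  have fD: "finite D" using D gamma_set_finite fin by blast
  have cD: "card D = gamma (V - {v}) E" using D gamma_set_card by blast
  have "a \<noteq> b" using ab irrE by blast
  show False
  proof (cases "b \<in> D")
    case True
    have "dominating (V - {v}) E (D - {a})" using dom_drop_leaf[OF dD aD True] ab \<open>a \<noteq> b\<close> symE by metis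
    then have "gamma (V - {v}) E \<le> card (D - {a})" using gamma_le fin by blast
    also have "\<dots> < card D" using card_Diff1_less[OF fD aD] .
    finally show False using cD by simp
  next
    case False
    have "\<forall>z. E z a \<longrightarrow> z = b" using ab symE by blast
    then have "dominating (V - {v}) E (insert b (D - {a}))"
      using dom_swap_leaf[OF dD aD b False] ab by blast
    moreover have "card (insert b (D - {a})) = card D" using card_insert_diff1[OF fD aD False] .
    ultimately have "gamma_set (V - {v}) E (insert b (D - {a}))"
      using gamma_setI[OF fin] cD by simp
    then have "insert b (D - {a}) = D" using uniq_eq[OF vV _ D] by blast
    then show False using False by blast
  qed
qed

lemma pair_contra:
  assumes vV: "v \<in> V" and a: "a \<in> V - {v}" and b: "b \<in> V - {v}" and ab: "leafat a b" and ba: "leafat b a"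
  shows False
proof -
  obtain D where D: "gamma_set (V - {v}) E D" using exDx[OF vV] by blast
  have dD: "dominating (V - {v}) E D" using D gamma_set_dom by blast
  have "a \<in> D \<or> b \<in> D"
  proof (rule ccontr)
    assume "\<not> (a \<in> D \<or> b \<in> D)"
    then obtain u where "u \<in> D" "E a u" using dD a unfolding dominating_def by blast
    then show False using ab \<open>\<not> (a \<in> D \<or> b \<in> D)\<close> by blast
  qed
  then show False using pair_half[OF vV a b ab ba D] pair_half[OF vV b a ba ab D] by blast
qed

lemma L2:
  assumes n3: "3 \<le> card V" and BV: "Bset = V"
  shows False
proof -
  obtain D1 D2 where D: "gamma_set V E D1" "gamma_set V E D2" "D1 \<noteq> D2" using two by blast
  have inB: "v \<in> V \<Longrightarrow> gamma V E \<le> gamma (V - {v}) E" for v using BV unfolding Bset_def by blast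
  have cover: "V \<subseteq> D1 \<union> D2"
  proof
    fix u assume u: "u \<in> V"
    show "u \<in> D1 \<union> D2"
    proof (rule ccontr)
      assume "u \<notin> D1 \<union> D2"
      then show False using fact1[OF u inB[OF u] D(1,2)] D(3) by blast
    qed
  qed
  have fD1: "finite D1" "finite D2" using gsetfin[OF D(1)] gsetfin[OF D(2)] by auto
  have U: "D1 \<union> D2 = V" using cover gsetV[OF D(1)] gsetV[OF D(2)] by blast
  have ore1: "2 * gamma V E \<le> card V" using ore[OF finV symE' irrE' noisoV] .
  have cU: "card (D1 \<union> D2) + card (D1 \<inter> D2) = card D1 + card D2" using card_Un_Int[OF fD1] by simp
  have cD: "card D1 = gamma V E" "card D2 = gamma V E" using gamma_set_card[OF D(1)] gamma_set_card[OF D(2)] by auto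
  have n2g: "card V = 2 * gamma V E" using cU cD U ore1 by simp
  have leaf: "\<exists>x\<in>V. leafat x v" if vV: "v \<in> V" for v
  proof -
    obtain Dv where Dv: "gamma_set V E Dv" "v \<notin> Dv" using D(1,2) D(3) cover vV
    proof -
      have "v \<notin> D1 \<or> v \<notin> D2"
      proof (rule ccontr)
        assume "\<not> (v \<notin> D1 \<or> v \<notin> D2)"
        then have "v \<in> D1 \<inter> D2" by blast
        moreover have "card (D1 \<inter> D2) = 0" using cU cD U n2g by simp
        ultimately show False using fD1 by auto
      qed
      then show ?thesis using that D(1,2) by blast
    qed
    have "dominating (V - {v}) E Dv" by (rule dom_del[OF Dv(2) gamma_set_dom[OF Dv(1)]])
    then have "gamma (V - {v}) E \<le> card Dv" by (rule gamma_le[rotated]) (use finV in simp)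
    then have le: "gamma (V - {v}) E \<le> gamma V E" using gamma_set_card[OF Dv(1)] by simp
    show ?thesis
    proof (rule ccontr)
      assume nl: "\<not> (\<exists>x\<in>V. leafat x v)"
      have "\<forall>z\<in>V - {v}. \<exists>y\<in>V - {v}. E z y"
      proof
        fix z assume z: "z \<in> V - {v}"
        obtain y where y: "E z y" using noiso z by blast
        show "\<exists>y\<in>V - {v}. E z y"
        proof (rule ccontr)
          assume "\<not> (\<exists>y\<in>V - {v}. E z y)"
          then have "\<forall>y. E z y \<longrightarrow> y = v" using edgeV by blast
          then have "leafat z v" using y by blast
          then show False using nl z by blast
        qed
      qed
      then have "2 * gamma (V - {v}) E \<le> card (V - {v})" using ore[of "V - {v}" E] finV symE' irrE' by blast
      moreover have "card (V - {v}) = card V - 1" using vV finV by simp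
      ultimately show False using inB[OF vV] n2g g_pos by linarith
    qed
  qed
  have mutual: "\<exists>x. leafat x v \<and> leafat v x" if vV: "v \<in> V" for v
  proof -
    obtain x where x: "x \<in> V" "leafat x v" using leaf[OF vV] by blast
    obtain z where z: "z \<in> V" "leafat z x" using leaf[OF x(1)] by blast
    have "E x z" using z(2) symE by blast
    then have "z = v" using x(2) by blast
    then show ?thesis using x z by blast
  qed
  obtain v where vV: "v \<in> V" using n3 by fastforce
  obtain x where x: "leafat x v" "leafat v x" using mutual[OF vV] by blast
  have "card V - card {v, x} \<le> card (V - {v, x})" by (rule diff_card_le_card_Diff) simp
  moreover have "card {v, x} \<le> 2" by (cases "v = x") auto
  ultimately have "V - {v, x} \<noteq> {}"
  proof -
    assume a: "card V - card {v, x} \<le> card (V - {v, x})" "card {v, x} \<le> 2"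
    show ?thesis
    proof
      assume "V - {v, x} = {}"
      then have "card (V - {v, x}) = 0" by (simp only: card.empty)
      then show False using a n3 by linarith
    qed
  qed
  then obtain w where w: "w \<in> V" "w \<noteq> v" "w \<noteq> x" by blast
  obtain y where y: "leafat y w" "leafat w y" using mutual[OF w(1)] by blast
  have yv: "y \<noteq> v"
  proof
    assume "y = v"
    then have "E v w" using y(1) symE by blast
    then show False using x(2) w(3) by blast
  qed
  have yV: "y \<in> V" using y edgeV by blast
  show False using pair_contra[OF vV, of w y] w yV yv y by blast
qed

end



lemma card_two_lt:
  assumes "finite D" "y \<in> D" "t \<in> D" "y \<noteq> t"
  shows "card (insert w (D - {y, t})) < card D"
proof -
  have f: "finite (D - {y, t})" using assms(1) by simp
  have "card (insert w (D - {y, t})) \<le> Suc (card (D - {y, t}))" using f by (simp add: card_insert_if)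
  moreover have "card (D - {y, t}) = card D - 2"
  proof -
    have "{y, t} \<subseteq> D" using assms by blast
    then have "card (D - {y, t}) = card D - card {y, t}" using card_Diff_subset assms(1) by (metis finite_subset)
    then show ?thesis using assms(4) by simp
  qed
  moreover have "2 \<le> card D"
  proof -
    have "{y, t} \<subseteq> D" using assms by blast
    then have "card {y, t} \<le> card D" by (rule card_mono[OF assms(1)])
    then show ?thesis using assms(4) by simp
  qed
  ultimately show ?thesis by linarith
qed

context hu begin

lemma leaf_rev: "leafat y w \<Longrightarrow> \<forall>t. E t y \<longrightarrow> t = w"
proof (intro allI impI)
  fix t assume "leafat y w" "E t y"
  then have "E y t" using symE by blast
  then show "t = w" using \<open>leafat y w\<close> by blast
qed

lemma BV: "v \<in> Bset \<Longrightarrow> v \<in> V" unfolding Bset_def by blast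

lemma one_leaf:
  assumes w: "w \<in> Bset" and y: "y \<in> V" "y \<notin> Bset" and z: "z \<in> V" "z \<notin> Bset" "y \<noteq> z"
    and ly: "leafat y w" and lz: "leafat z w"
  shows False
proof -
  obtain Dy where Dy: "gamma_set (V - {y}) E Dy" using exDx[OF y(1)] by blast
  have yw: "E y w" using ly by blast
  note F = fact2[OF w y yw Dy]
  note P = Dx_props[OF y Dy]
  have "z \<in> Dy"
  proof (rule ccontr)
    assume "z \<notin> Dy"
    then have "z \<in> V - {y} - Dy" using z by blast
    then obtain u where "u \<in> Dy" "E z u" using P(5) unfolding dominating_def by blast
    then have "u = w" using lz by blast
    then show False using F(2) \<open>u \<in> Dy\<close> by blast
  qed
  have yF: "y \<in> insert y Dy" and zF: "z \<in> insert y Dy" using \<open>z \<in> Dy\<close> by auto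
  have wV: "w \<in> V" by (rule BV[OF w])
  have dF: "dominating V E (insert y Dy)" by (rule gamma_set_dom[OF F(4)])
  have "dominating V E (insert w (insert y Dy - {y, z}))"
    by (rule dom_two_leaves[OF dF yF zF wV]) (use ly lz leaf_rev[OF ly] leaf_rev[OF lz] in auto)
  moreover have "card (insert w (insert y Dy - {y, z})) < card (insert y Dy)"
    by (rule card_two_lt) (use P(3) yF zF z(3) in auto)
  ultimately show False using less_gamma gamma_set_card[OF F(4)] by simp
qed

lemma mixed:
  assumes n3: "3 \<le> card V" and Bne: "Bset \<noteq> {}" and BnV: "Bset \<noteq> V"
  shows False
proof -
  have BsubV: "Bset \<subseteq> V" unfolding Bset_def by blast
  have Aleaf: "\<exists>b\<in>Bset. leafat z b" if z: "z \<in> V" "z \<notin> Bset" for z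
  proof -
    define S where "S = Bset \<union> {z \<in> V. \<exists>b\<in>Bset. E z b}"
    have cl: "\<forall>s\<in>S. \<forall>t. E s t \<longrightarrow> t \<in> S"
    proof (intro ballI allI impI)
      fix s t assume s: "s \<in> S" and st: "E s t"
      show "t \<in> S"
      proof (cases "s \<in> Bset")
        case True
        have tV: "t \<in> V" using edgeV(2)[OF st] .
        have "E t s" using symE[OF st] .
        then show ?thesis using True tV unfolding S_def by blast
      next
        case False
        then obtain b where b: "b \<in> Bset" "E s b" "s \<in> V" using s unfolding S_def by blast
        obtain Ds where Ds: "gamma_set (V - {s}) E Ds" using exDx[OF b(3)] by blast
        have "\<forall>y. E s y \<longrightarrow> y = b" using fact2(1)[OF b(1) b(3) False b(2) Ds] .
        then have "t = b" using st by blast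
        then show ?thesis using b(1) unfolding S_def by blast
      qed
    qed
    have "S = V" by (rule conn) (use BsubV Bne cl in \<open>auto simp: S_def\<close>)
    then have "z \<in> S" using z by blast
    then obtain b where b: "b \<in> Bset" "E z b" using z unfolding S_def by blast
    obtain Dz where Dz: "gamma_set (V - {z}) E Dz" using exDx[OF z(1)] by blast
    have "\<forall>y. E z y \<longrightarrow> y = b" using fact2(1)[OF b(1) z b(2) Dz] .
    then show ?thesis using b by blast
  qed
  obtain x where x: "x \<in> V" "x \<notin> Bset" using BnV BsubV by blast
  obtain v where v: "v \<in> Bset" "leafat x v" using Aleaf[OF x] by blast
  have vV: "v \<in> V" by (rule BV[OF v(1)])
  obtain Dx where Dx: "gamma_set (V - {x}) E Dx" using exDx[OF x(1)] by blast
  have xv0: "E x v" using v(2) by blast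
  note F2 = fact2[OF v(1) x xv0 Dx]
  note P = Dx_props[OF x Dx]
  define F where "F = insert x Dx"
  define H where "H = insert v Dx"
  have gF: "gamma_set V E F" using F2(4) F_def by simp
  have gH: "gamma_set V E H" using F2(5) H_def by simp
  have xv: "x \<noteq> v" using xv0 irrE by blast
  have M1: "Bset \<subseteq> insert v Dx"
  proof
    fix u assume u: "u \<in> Bset"
    show "u \<in> insert v Dx"
    proof (rule ccontr)
      assume nu: "u \<notin> insert v Dx"
      have uV: "u \<in> V" by (rule BV[OF u])
      have ux: "u \<noteq> x" using u x(2) by blast
      have ub: "gamma V E \<le> gamma (V - {u}) E" using u unfolding Bset_def by blast
      have "u \<notin> F" "u \<notin> H" using nu ux unfolding F_def H_def by auto
      then have "F = H" using fact1[OF uV ub gF gH] by blast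
      then have "x \<in> H" unfolding F_def by blast
      then show False using xv F2(3) unfolding H_def by blast
    qed
  qed
  have M3: "Dx \<subseteq> Bset"
  proof
    fix l assume lD: "l \<in> Dx"
    show "l \<in> Bset"
    proof (rule ccontr)
      assume lB: "l \<notin> Bset"
      have lV: "l \<in> V" using lD P(2) by blast
      obtain w where w: "w \<in> Bset" "leafat l w" using Aleaf[OF lV lB] by blast
      have "w \<in> insert v Dx" using M1 w(1) by blast
      then show False
      proof
        assume wv: "w = v"
        have lx: "l \<noteq> x" using lD F2(3) by blast
        have xF: "x \<in> F" and lF: "l \<in> F" using lD unfolding F_def by auto
        have dF: "dominating V E F" by (rule gamma_set_dom[OF gF])
        have "dominating V E (insert v (F - {x, l}))"
          by (rule dom_two_leaves[OF dF xF lF vV]) (use v(2) w(2) wv leaf_rev[OF v(2)] leaf_rev[OF w(2)] in auto)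
        moreover have "card (insert v (F - {x, l})) < card F"
          by (rule card_two_lt) (use gsetfin[OF gF] xF lF lx in auto)
        ultimately show False using less_gamma gamma_set_card[OF gF] by simp
      next
        assume wD: "w \<in> Dx"
        have lw: "w \<noteq> l" using w(2) irrE by blast
        have "dominating (V - {x}) E (Dx - {l})"
          by (rule dom_drop_leaf[OF P(5) lD wD lw]) (use w(2) leaf_rev[OF w(2)] in auto)
        then have "gamma (V - {x}) E \<le> card (Dx - {l})" by (rule gamma_le[rotated]) (use finV in simp)
        moreover have "card (Dx - {l}) < card Dx" by (rule card_Diff1_less[OF P(3) lD])
        moreover have "card Dx = gamma (V - {x}) E" by (rule gamma_set_card[OF Dx])
        ultimately show False by simp
      qed
    qed
  qed
  have Beq: "Bset = insert v Dx" using M1 M3 v(1) by blast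
  have vF: "v \<notin> F" using xv F2(2) unfolding F_def by blast
  show False
  proof (cases "\<exists>y\<in>V. y \<notin> Bset \<and> y \<noteq> x")
    case False
    then have Veq: "V = insert x (insert v Dx)" using Beq BsubV x(1) by blast
    have "card (insert x (insert v Dx)) = card Dx + 2"
      using P(3) F2(2,3) xv by simp
    then have "card V = gamma V E + 1" using Veq P(1) g_pos by simp
    moreover have "2 * gamma V E \<le> card V" by (rule ore[OF finV symE' irrE' noisoV])
    ultimately show False using n3 by linarith
  next
    case True
    then obtain y where y: "y \<in> V" "y \<notin> Bset" "y \<noteq> x" by blast
    obtain w where w: "w \<in> Bset" "leafat y w" using Aleaf[OF y(1,2)] by blast
    have yF: "y \<notin> F" using y Beq unfolding F_def by blast
    have wv: "w \<noteq> v"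
    proof
      assume "w = v"
      have "y \<in> V - F" using y(1) yF by blast
      then obtain u where "u \<in> F" "E y u" using gamma_set_dom[OF gF] unfolding dominating_def by blast
      then have "u = v" using w(2) \<open>w = v\<close> by blast
      then show False using \<open>u \<in> F\<close> vF by blast
    qed
    have wF: "w \<in> F" using w(1) wv Beq unfolding F_def by blast
    define F' where "F' = insert y (F - {w})"
    have yv: "y \<noteq> v" using y(2) v(1) by blast
    have FV: "F \<subseteq> V" by (rule gsetV[OF gF])
    have dF': "dominating (V - {v}) E F'"
      unfolding dominating_def
    proof (intro conjI ballI)
      show "F' \<subseteq> V - {v}" using y(1) yv FV vF unfolding F'_def by blast
    next
      fix t assume t: "t \<in> V - {v} - F'"
      show "\<exists>u\<in>F'. E t u"
      proof (cases "t = w")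
        case True
        have "E w y" using w(2) symE by blast
        then show ?thesis using True unfolding F'_def by blast
      next
        case False
        then have tF: "t \<in> V - F" using t unfolding F'_def by blast
        then obtain u where u: "u \<in> F" "E t u" using gamma_set_dom[OF gF] unfolding dominating_def by blast
        show ?thesis
        proof (cases "u = w")
          case False then show ?thesis using u unfolding F'_def by blast
        next
          case True
          have tB: "t \<notin> Bset" using tF t Beq unfolding F_def by blast
          have tV: "t \<in> V" using t by blast
          obtain w' where w': "w' \<in> Bset" "leafat t w'" using Aleaf[OF tV tB] by blast
          have "w' = w" using w'(2) u(2) True by blast
          have yt: "y \<noteq> t" using t unfolding F'_def by blast
          have False using one_leaf[OF w(1) y(1,2) tV tB yt w(2)] w'(2) \<open>w' = w\<close> by blast
          then show ?thesis ..
        qed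
      qed
    qed
    have cF': "card F' = card F" unfolding F'_def by (rule card_insert_diff1[OF gsetfin[OF gF] wF yF])
    have gF': "gamma_set (V - {v}) E F'" using gs_del[OF v(1) dF'] cF' gamma_set_card[OF gF] by simp
    have dFv: "dominating (V - {v}) E F" by (rule dom_del[OF vF gamma_set_dom[OF gF]])
    have gFv: "gamma_set (V - {v}) E F" using gs_del[OF v(1) dFv] gamma_set_card[OF gF] by simp
    have "F' = F" by (rule uniq_eq[OF vV gF' gFv])
    then show False using yF unfolding F'_def by blast
  qed
qed

lemma Lmain: assumes "3 \<le> card V" "v \<in> V" shows "gamma (V - {v}) E = gamma V E - 1"
proof -
  have "Bset = {}" using L2[OF assms(1)] mixed[OF assms(1)] by blast
  then have "v \<notin> Bset" by blast
  then show ?thesis using notB assms(2) by blast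
qed

lemma noleaf: assumes n3: "3 \<le> card V" and lf: "leafat x v" shows False
proof -
  have vV: "v \<in> V" and xV: "x \<in> V" using lf edgeV by blast+
  obtain Dv where Dv: "gamma_set (V - {v}) E Dv" using exDx[OF vV] by blast
  have cDv: "card Dv = gamma V E - 1" using gamma_set_card[OF Dv] Lmain[OF n3 vV] by simp
  have dDv: "dominating (V - {v}) E Dv" by (rule gamma_set_dom[OF Dv])
  have DvV: "Dv \<subseteq> V - {v}" by (rule gamma_set_subset[OF Dv])
  have xv: "x \<noteq> v" using lf irrE by blast
  have xD: "x \<in> Dv"
  proof (rule ccontr)
    assume "x \<notin> Dv"
    then have "x \<in> V - {v} - Dv" using xV xv by blast
    then obtain u where "u \<in> Dv" "E x u" using dDv unfolding dominating_def by blast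
    then show False using lf DvV by blast
  qed
  have "dominating V E (insert v (Dv - {x}))"
    unfolding dominating_def
  proof (intro conjI ballI)
    show "insert v (Dv - {x}) \<subseteq> V" using vV DvV by blast
  next
    fix t assume t: "t \<in> V - insert v (Dv - {x})"
    show "\<exists>u\<in>insert v (Dv - {x}). E t u"
    proof (cases "t = x")
      case True then show ?thesis using lf by blast
    next
      case False
      then have "t \<in> V - {v} - Dv" using t by blast
      then obtain u where u: "u \<in> Dv" "E t u" using dDv unfolding dominating_def by blast
      have "u \<noteq> x"
      proof
        assume "u = x"
        then have "E x t" using u(2) symE by blast
        then have "t = v" using lf by blast
        then show False using t by blast
      qed
      then show ?thesis using u by blast
    qed
  qed
  moreover have "card (insert v (Dv - {x})) = card Dv"
    by (rule card_insert_diff1[OF gamma_set_finite[OF _ Dv] xD]) (use finV DvV in auto)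
  ultimately have "dominating V E (insert v (Dv - {x}))" "card (insert v (Dv - {x})) < gamma V E"
    using cDv g_pos by auto
  then show False by (rule less_gamma)
qed

lemma two_nbrs: assumes n3: "3 \<le> card V" and xV: "x \<in> V" shows "\<exists>y z. y \<noteq> z \<and> E x y \<and> E x z"
proof -
  obtain y where y: "E x y" using noiso[OF xV] by blast
  have "\<not> leafat x y" using noleaf[OF n3] by blast
  then obtain z where "E x z" "z \<noteq> y" using y by blast
  then show ?thesis using y by blast
qed

lemma bound3: assumes n3: "3 \<le> card V" shows "3 * gamma V E \<le> card V + 2"
proof -
  obtain v where vV: "v \<in> V" using n3 by fastforce
  obtain Dv where Dv: "gamma_set (V - {v}) E Dv" using exDx[OF vV] by blast
  have un: "\<forall>D'. gamma_set (V - {v}) E D' \<longrightarrow> D' = Dv" using uniq_eq[OF vV _ Dv] by blast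
  have ni: "\<forall>z\<in>V - {v}. \<exists>y\<in>V - {v}. E z y"
  proof
    fix z assume z: "z \<in> V - {v}"
    obtain y1 y2 where "y1 \<noteq> y2" "E z y1" "E z y2" using two_nbrs[OF n3] z by blast
    then show "\<exists>y\<in>V - {v}. E z y" using edgeV by blast
  qed
  have fin: "finite (V - {v})" using finV by simp
  have "2 * card Dv \<le> card (V - {v} - Dv)" by (rule epn_bound[OF fin symE' irrE' ni Dv un])
  moreover have "card (V - {v} - Dv) = card (V - {v}) - card Dv"
    using gamma_set_subset[OF Dv] fin by (simp add: card_Diff_subset gamma_set_finite[OF fin Dv])
  moreover have "card (V - {v}) = card V - 1" using vV finV by simp
  moreover have "card Dv = gamma V E - 1" using gamma_set_card[OF Dv] Lmain[OF n3 vV] by simp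
  ultimately show ?thesis using g_pos n3 by linarith
qed

end



lemma matching_iso:
  assumes "finite W" "\<forall>x\<in>W. p x \<in> W \<and> p x \<noteq> x \<and> p (p x) = x"
  shows "even (card W) \<and> (\<exists>f. bij_betw f W {0..<card W} \<and>
           (\<forall>x\<in>W. \<forall>y\<in>W. (f x div 2 = f y div 2) \<longleftrightarrow> (y = x \<or> y = p x)))"
  using assms
proof (induction "card W" arbitrary: W rule: less_induct)
  case less
  show ?case
  proof (cases "W = {}")
    case True then show ?thesis by (auto simp: bij_betw_def)
  next
    case False
    then obtain a where a: "a \<in> W" by blast
    have b: "p a \<in> W" "p a \<noteq> a" "p (p a) = a" using less.prems(2) a by auto
    define W' where "W' = W - {a, p a}"
    have sub: "{a, p a} \<subseteq> W" using a b by blast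
    have cW': "card W' = card W - 2"
      unfolding W'_def using card_Diff_subset[OF _ sub] less.prems(1) b(2) by (simp add: finite_subset)
    have c2: "2 \<le> card W" using card_mono[OF less.prems(1) sub] b(2) by simp
    have finW': "finite W'" using less.prems(1) W'_def by simp
    have clo: "\<forall>x\<in>W'. p x \<in> W' \<and> p x \<noteq> x \<and> p (p x) = x"
    proof
      fix x assume x: "x \<in> W'"
      have xW: "x \<in> W" "x \<noteq> a" "x \<noteq> p a" using x W'_def by auto
      have px: "p x \<in> W" "p x \<noteq> x" "p (p x) = x" using less.prems(2) xW(1) by auto
      have "p x \<noteq> a"
      proof
        assume "p x = a"
        then have "x = p a" using px(3) by simp
        then show False using xW by simp
      qed
      moreover have "p x \<noteq> p a"
      proof
        assume "p x = p a"
        then have "p (p x) = p (p a)" by simp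
        then have "x = a" using px(3) b(3) by simp
        then show False using xW by simp
      qed
      ultimately show "p x \<in> W' \<and> p x \<noteq> x \<and> p (p x) = x" using px W'_def by auto
    qed
    have "card W' < card W" using cW' c2 by simp
    from less.hyps[OF this finW' clo] obtain f' where
      ev: "even (card W')" and bf: "bij_betw f' W' {0..<card W'}"
      and pf: "\<forall>x\<in>W'. \<forall>y\<in>W'. (f' x div 2 = f' y div 2) \<longleftrightarrow> (y = x \<or> y = p x)" by blast
    define k where "k = card W'"
    define f where "f x = (if x = a then k else if x = p a then Suc k else f' x)" for x
    have Weq: "W = W' \<union> {a, p a}" using sub W'_def by blast
    have cW: "card W = k + 2" using cW' c2 k_def by simp
    have bf1: "bij_betw f W' {0..<k}"
      using bf unfolding k_def by (rule bij_betw_cong[THEN iffD1, rotated]) (auto simp: f_def W'_def)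
    have bf2: "bij_betw f {a, p a} {k, Suc k}"
      unfolding bij_betw_def inj_on_def f_def using b(2) by auto
    have "bij_betw f (W' \<union> {a, p a}) ({0..<k} \<union> {k, Suc k})"
      by (rule bij_betw_combine[OF bf1 bf2]) auto
    moreover have "{0..<k} \<union> {k, Suc k} = {0..<card W}" using cW by auto
    ultimately have bfW: "bij_betw f W {0..<card W}" using Weq by simp
    have lt: "f x div 2 < k div 2" if "x \<in> W'" for x
    proof -
      have "f x = f' x" using that W'_def f_def by auto
      moreover have "f' x < k" using bf that unfolding k_def bij_betw_def by auto
      ultimately show ?thesis using ev unfolding k_def by presburger
    qed
    have eqk: "f x div 2 = k div 2" if "x = a \<or> x = p a" for x
      using that ev b(2) unfolding f_def k_def by auto
    have propf: "\<forall>x\<in>W. \<forall>y\<in>W. (f x div 2 = f y div 2) \<longleftrightarrow> (y = x \<or> y = p x)"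
    proof (intro ballI)
      fix x y assume x: "x \<in> W" and y: "y \<in> W"
      show "(f x div 2 = f y div 2) \<longleftrightarrow> (y = x \<or> y = p x)"
      proof (cases "x \<in> W'")
        case xin: True
        show ?thesis
        proof (cases "y \<in> W'")
          case True
          have "f x = f' x" "f y = f' y" using xin True W'_def f_def by auto
          then show ?thesis using pf xin True by simp
        next
          case False
          then have "y = a \<or> y = p a" using y W'_def by blast
          then have "f y div 2 = k div 2" by (rule eqk)
          moreover have "f x div 2 < k div 2" by (rule lt[OF xin])
          moreover have "y \<noteq> x" "y \<noteq> p x" using xin False clo by auto
          ultimately show ?thesis by simp
        qed
      next
        case xout: False
        then have xa: "x = a \<or> x = p a" using x W'_def by blast
        show ?thesis
        proof (cases "y \<in> W'")
          case True
          have "f x div 2 = k div 2" by (rule eqk[OF xa])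
          moreover have "f y div 2 < k div 2" by (rule lt[OF True])
          moreover have "y \<noteq> x" using True xout by blast
          moreover have "y \<noteq> p x" using xa True W'_def b(3) by auto
          ultimately show ?thesis by simp
        next
          case False
          then have ya: "y = a \<or> y = p a" using y W'_def by blast
          have "f x div 2 = f y div 2" using eqk[OF xa] eqk[OF ya] by simp
          moreover have "y = x \<or> y = p x" using xa ya b(3) by auto
          ultimately show ?thesis by simp
        qed
      qed
    qed
    have "even (card W)" using cW ev k_def by simp
    then show ?thesis using bfW propf by blast
  qed
qed

lemma list_iso:
  assumes "distinct xs" "set xs = V" "length xs = m"
    "\<forall>i<m. \<forall>j<m. E (xs ! i) (xs ! j) \<longleftrightarrow> F i j"
  shows "graph_iso V E {0..<m} F"
proof -
  have bg: "bij_betw (nth xs) {0..<m} V"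
    using bij_betw_nth[OF assms(1), of "{0..<m}" V] assms(2,3) by (simp add: atLeast0LessThan)
  define f where "f = the_inv_into {0..<m} (nth xs)"
  have bf: "bij_betw f V {0..<m}" unfolding f_def by (rule bij_betw_the_inv_into[OF bg])
  have inv: "xs ! (f x) = x" if "x \<in> V" for x
    unfolding f_def using f_the_inv_into_f_bij_betw[OF bg that] .
  have fm: "f x < m" if "x \<in> V" for x using bf that unfolding bij_betw_def by auto
  have "\<forall>x\<in>V. \<forall>y\<in>V. E x y \<longleftrightarrow> F (f x) (f y)"
  proof (intro ballI)
    fix x y assume x: "x \<in> V" and y: "y \<in> V"
    have "E x y = E (xs ! (f x)) (xs ! (f y))" using inv x y by simp
    also have "\<dots> = F (f x) (f y)" using assms(4) fm x y by blast
    finally show "E x y \<longleftrightarrow> F (f x) (f y)" .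
  qed
  then show ?thesis unfolding graph_iso_def using bf by blast
qed

lemma iso_trans:
  assumes "graph_iso V E W F" "graph_iso W F U H"
  shows "graph_iso V E U H"
proof -
  obtain f where f: "bij_betw f V W" "\<forall>x\<in>V. \<forall>y\<in>V. E x y \<longleftrightarrow> F (f x) (f y)"
    using assms(1) unfolding graph_iso_def by blast
  obtain g where g: "bij_betw g W U" "\<forall>x\<in>W. \<forall>y\<in>W. F x y \<longleftrightarrow> H (g x) (g y)"
    using assms(2) unfolding graph_iso_def by blast
  have "bij_betw (g \<circ> f) V U" using bij_betw_trans[OF f(1) g(1)] .
  moreover have "\<forall>x\<in>V. \<forall>y\<in>V. E x y \<longleftrightarrow> H ((g \<circ> f) x) ((g \<circ> f) y)"
  proof (intro ballI)
    fix x y assume x: "x \<in> V" and y: "y \<in> V"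
    have "f x \<in> W" "f y \<in> W" using f(1) x y unfolding bij_betw_def by auto
    then show "E x y \<longleftrightarrow> H ((g \<circ> f) x) ((g \<circ> f) y)" using f(2) g(2) x y by simp
  qed
  ultimately show ?thesis unfolding graph_iso_def by blast
qed

lemma all_less_4: "(\<forall>i<(4::nat). P i) \<longleftrightarrow> P 0 \<and> P 1 \<and> P 2 \<and> P 3"
proof -
  have "(4::nat) = Suc (Suc (Suc (Suc 0)))" by simp
  then show ?thesis by (simp only: All_less_Suc) (simp add: conj_ac numeral_2_eq_2 numeral_3_eq_3 eval_nat_numeral)
qed

lemma all_less_7: "(\<forall>i<(7::nat). P i) \<longleftrightarrow> P 0 \<and> P 1 \<and> P 2 \<and> P 3 \<and> P 4 \<and> P 5 \<and> P 6"
proof -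
  have "(7::nat) = Suc (Suc (Suc (Suc (Suc (Suc (Suc 0))))))" by simp
  then show ?thesis by (simp only: All_less_Suc) (simp add: conj_ac numeral_2_eq_2 numeral_3_eq_3 eval_nat_numeral)
qed

lemma cocktail4_cycle4: "graph_iso {0..<4::nat} (cocktail_adj 4) {0..<4} (cycle_adj 4)"
proof (rule list_iso[where xs = "[0, 2, 1, 3]"])
  show "\<forall>i<4. \<forall>j<4. cocktail_adj 4 ([0, 2, 1, 3] ! i) ([0, 2, 1, 3] ! j) \<longleftrightarrow> cycle_adj 4 i j"
    unfolding all_less_4 by (simp add: cocktail_adj_def cycle_adj_def)
qed auto




context hu begin

lemma gamma1_K2:
  assumes g1: "gamma V E = 1"
  shows "graph_iso V E {0..<2} (complete_adj 2)"
proof -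
  obtain D1 D2 where D: "gamma_set V E D1" "gamma_set V E D2" "D1 \<noteq> D2" using two by blast
  have c1: "card D1 = 1" "card D2 = 1" using gamma_set_card[OF D(1)] gamma_set_card[OF D(2)] g1 by auto
  obtain a where a: "D1 = {a}" using c1(1) card_1_singletonE by blast
  obtain b where b: "D2 = {b}" using c1(2) card_1_singletonE by blast
  have ab: "a \<noteq> b" using D(3) a b by blast
  have aV: "a \<in> V" and bV: "b \<in> V" using gsetV[OF D(1)] gsetV[OF D(2)] a b by auto
  have da: "dominating V E {a}" using gamma_set_dom[OF D(1)] a by simp
  have db: "dominating V E {b}" using gamma_set_dom[OF D(2)] b by simp
  have Veq: "V = {a, b}"
  proof (rule ccontr)
    assume "V \<noteq> {a, b}"
    then obtain c where c: "c \<in> V" "c \<noteq> a" "c \<noteq> b" using aV bV by blast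
    have dca: "dominating (V - {c}) E {a}" by (rule dom_del[OF _ da]) (use c in simp)
    have dcb: "dominating (V - {c}) E {b}" by (rule dom_del[OF _ db]) (use c in simp)
    have fin: "finite (V - {c})" using finV by simp
    have "1 \<le> gamma (V - {c}) E" by (rule gamma_pos[OF fin]) (use aV c in blast)
    then have "gamma_set (V - {c}) E {a}" "gamma_set (V - {c}) E {b}"
      using gamma_setI[OF fin dca] gamma_setI[OF fin dcb] by auto
    then have "{a} = {b}" using uniq_eq[OF c(1)] by blast
    then show False using ab by simp
  qed
  have Eab: "E a b"
  proof -
    have "b \<in> V - {a}" using bV ab by blast
    then obtain u where "u \<in> {a}" "E b u" using da unfolding dominating_def by blast
    then show ?thesis using symE by blast
  qed
  define f where "f z = (if z = a then 0 else 1::nat)" for z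
  have "bij_betw f V {0..<2}"
    unfolding bij_betw_def inj_on_def Veq f_def using ab by auto
  moreover have "\<forall>x\<in>V. \<forall>y\<in>V. E x y \<longleftrightarrow> complete_adj 2 (f x) (f y)"
    unfolding Veq f_def complete_adj_def using ab Eab symE[OF Eab] irrE by auto
  ultimately show ?thesis unfolding graph_iso_def by blast
qed

lemma K2_gamma1:
  assumes iso: "graph_iso V E {0..<2} (complete_adj 2)"
  shows "gamma V E = 1 \<and> card V = 2"
proof -
  obtain f where f: "bij_betw f V {0..<2}" "\<forall>x\<in>V. \<forall>y\<in>V. E x y \<longleftrightarrow> complete_adj 2 (f x) (f y)"
    using iso unfolding graph_iso_def by blast
  have cV: "card V = 2" using bij_betw_same_card[OF f(1)] by simp
  have "(0::nat) \<in> f ` V" using f(1) unfolding bij_betw_def by auto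
  then obtain a where a: "a \<in> V" "f a = 0" by (metis imageE)
  have "dominating V E {a}"
    unfolding dominating_def
  proof (intro conjI ballI)
    show "{a} \<subseteq> V" using a by blast
  next
    fix z assume z: "z \<in> V - {a}"
    have "f z \<noteq> f a" using f(1) z a unfolding bij_betw_def inj_on_def by blast
    moreover have "f z < 2" using f(1) z unfolding bij_betw_def by auto
    ultimately have "complete_adj 2 (f z) (f a)" using a unfolding complete_adj_def by auto
    then show "\<exists>u\<in>{a}. E z u" using f(2) z a by blast
  qed
  then have "gamma V E \<le> 1" using gamma_le[OF finV] by fastforce
  then show ?thesis using g_pos cV by simp
qed

lemma gamma2_cocktail:
  assumes g2: "gamma V E = 2"
  shows "4 \<le> card V \<and> even (card V) \<and> graph_iso V E {0..<card V} (cocktail_adj (card V))"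
proof -
  have n3: "3 \<le> card V" using g_lt g2 by simp
  define P where "P v w \<longleftrightarrow> w \<in> V \<and> w \<noteq> v \<and> (\<forall>z\<in>V - {v, w}. E z w) \<and> \<not> E w v
      \<and> (\<forall>w'\<in>V - {v}. (\<forall>z\<in>V - {v, w'}. E z w') \<longrightarrow> w' = w)" for v w
  have PV: "w \<in> V" and Pne: "w \<noteq> v" and PnE: "\<not> E w v" if "P v w" for v w
    using that unfolding P_def by simp_all
  have Pall: "E z w" if "P v w" "z \<in> V - {v, w}" for v w z
    using that unfolding P_def by simp
  have exW: "\<exists>w. P v w" if vV: "v \<in> V" for v
  proof -
    obtain Dv where Dv: "gamma_set (V - {v}) E Dv" using exDx[OF vV] by blast
    have "card Dv = 1" using gamma_set_card[OF Dv] Lmain[OF n3 vV] g2 by simp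
    then obtain w where w: "Dv = {w}" using card_1_singletonE by blast
    have wV: "w \<in> V - {v}" using gamma_set_subset[OF Dv] w by blast
    have dw: "dominating (V - {v}) E {w}" using gamma_set_dom[OF Dv] w by simp
    have all: "\<forall>z\<in>V - {v, w}. E z w" using dw unfolding dominating_def by blast
    have nE: "\<not> E w v"
    proof
      assume "E w v"
      have "dominating V E {w}"
        unfolding dominating_def
      proof (intro conjI ballI)
        show "{w} \<subseteq> V" using wV by blast
      next
        fix z assume z: "z \<in> V - {w}"
        show "\<exists>u\<in>{w}. E z u"
        proof (cases "z = v")
          case True then show ?thesis using \<open>E w v\<close> symE by blast
        next
          case False then show ?thesis using all z by blast
        qed
      qed
      then have "gamma V E \<le> 1" using gamma_le[OF finV] by fastforce
      then show False using g2 by simp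
    qed
    have un: "\<forall>w'\<in>V - {v}. (\<forall>z\<in>V - {v, w'}. E z w') \<longrightarrow> w' = w"
    proof (intro ballI impI)
      fix w' assume w': "w' \<in> V - {v}" and al: "\<forall>z\<in>V - {v, w'}. E z w'"
      have "dominating (V - {v}) E {w'}" unfolding dominating_def using w' al by blast
      moreover have "card {w'} \<le> gamma (V - {v}) E" using Lmain[OF n3 vV] g2 by simp
      moreover have "finite (V - {v})" using finV by simp
      ultimately have "gamma_set (V - {v}) E {w'}" using gamma_setI by blast
      then have "{w'} = Dv" using uniq_eq[OF vV _ Dv] by blast
      then show "w' = w" using w by blast
    qed
    show ?thesis unfolding P_def using wV all nE un by blast
  qed
  have "\<forall>v\<in>V. \<exists>w. P v w" using exW by blast
  from bchoice[OF this] obtain W where W: "\<forall>v\<in>V. P v (W v)" by blast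
  have Winj: "inj_on W V"
  proof (rule inj_onI)
    fix u v assume u: "u \<in> V" and v: "v \<in> V" and eq: "W u = W v"
    show "u = v"
    proof (rule ccontr)
      assume "u \<noteq> v"
      have Pu: "P u (W u)" and Pv: "P v (W v)" using W u v by blast+
      have "v \<noteq> W v" using Pne[OF Pv] by simp
      then have "v \<in> V - {u, W u}" using v \<open>u \<noteq> v\<close> eq by blast
      then have "E v (W u)" by (rule Pall[OF Pu])
      then have "E (W v) v" using eq symE[of v "W u"] by simp
      then show False using PnE[OF Pv] by simp
    qed
  qed
  have Wsub: "W ` V \<subseteq> V" using W PV by blast
  have Wsurj: "W ` V = V" by (rule endo_inj_surj[OF finV Wsub Winj])
  define p where "p = the_inv_into V W"
  have bW: "bij_betw W V V" using Winj Wsurj unfolding bij_betw_def by blast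
  have pV: "p u \<in> V" if "u \<in> V" for u
    unfolding p_def by (rule the_inv_into_into[OF Winj]) (use that Wsurj in auto)
  have Wp: "W (p u) = u" if "u \<in> V" for u
    unfolding p_def by (rule f_the_inv_into_f[OF Winj]) (use that Wsurj in auto)
  have char: "\<forall>u\<in>V. \<forall>z\<in>V. E u z \<longleftrightarrow> (z \<noteq> u \<and> z \<noteq> p u)"
  proof (intro ballI)
    fix u z assume u: "u \<in> V" and z: "z \<in> V"
    have "P (p u) (W (p u))" using W pV[OF u] by blast
    then have Pp: "P (p u) u" using Wp[OF u] by simp
    show "E u z \<longleftrightarrow> (z \<noteq> u \<and> z \<noteq> p u)"
    proof
      assume "E u z"
      then show "z \<noteq> u \<and> z \<noteq> p u" using irrE PnE[OF Pp] by blast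
    next
      assume "z \<noteq> u \<and> z \<noteq> p u"
      then have "z \<in> V - {p u, u}" using z by blast
      then have "E z u" by (rule Pall[OF Pp])
      then show "E u z" using symE by blast
    qed
  qed
  have pprops: "\<forall>x\<in>V. p x \<in> V \<and> p x \<noteq> x \<and> p (p x) = x"
  proof
    fix x assume x: "x \<in> V"
    have "P (p x) (W (p x))" using W pV[OF x] by blast
    then have Pp: "P (p x) x" using Wp[OF x] by simp
    have px: "p x \<noteq> x" using Pne[OF Pp] by simp
    have "\<not> E (p x) x" using PnE[OF Pp] symE by blast
    then have "\<not> (x \<noteq> p x \<and> x \<noteq> p (p x))" using char pV[OF x] x by blast
    then have "p (p x) = x" using px by auto
    then show "p x \<in> V \<and> p x \<noteq> x \<and> p (p x) = x" using pV[OF x] px by blast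
  qed
  from matching_iso[OF finV pprops] obtain f where
    ev: "even (card V)" and bf: "bij_betw f V {0..<card V}"
    and fp: "\<forall>x\<in>V. \<forall>y\<in>V. (f x div 2 = f y div 2) \<longleftrightarrow> (y = x \<or> y = p x)" by blast
  have "\<forall>x\<in>V. \<forall>y\<in>V. E x y \<longleftrightarrow> cocktail_adj (card V) (f x) (f y)"
  proof (intro ballI)
    fix x y assume x: "x \<in> V" and y: "y \<in> V"
    have lt: "f x < card V" "f y < card V" using bf x y unfolding bij_betw_def by auto
    have "f x = f y \<longleftrightarrow> x = y" using bf x y unfolding bij_betw_def inj_on_def by blast
    then show "E x y \<longleftrightarrow> cocktail_adj (card V) (f x) (f y)"
      unfolding cocktail_adj_def using lt fp x y char by auto
  qed
  then have "graph_iso V E {0..<card V} (cocktail_adj (card V))" unfolding graph_iso_def using bf by blast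
  moreover have "4 \<le> card V" using n3 ev by presburger
  ultimately show ?thesis using ev by blast
qed

lemma cocktail_gamma2:
  assumes n4: "4 \<le> card V" and iso: "graph_iso V E {0..<card V} (cocktail_adj (card V))"
  shows "gamma V E = 2"
proof -
  obtain f where f: "bij_betw f V {0..<card V}"
    "\<forall>x\<in>V. \<forall>y\<in>V. E x y \<longleftrightarrow> cocktail_adj (card V) (f x) (f y)"
    using iso unfolding graph_iso_def by blast
  have "(0::nat) \<in> f ` V" "(1::nat) \<in> f ` V" using f(1) n4 unfolding bij_betw_def by auto
  then obtain a b where a: "a \<in> V" "f a = 0" and b: "b \<in> V" "f b = 1" by (metis imageE)
  have "dominating V E {a, b}"
    unfolding dominating_def
  proof (intro conjI ballI)
    show "{a, b} \<subseteq> V" using a b by blast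
  next
    fix z assume z: "z \<in> V - {a, b}"
    have "f z \<noteq> f a" "f z \<noteq> f b" using f(1) z a b unfolding bij_betw_def inj_on_def by blast+
    moreover have "f z < card V" using f(1) z unfolding bij_betw_def by auto
    ultimately have "cocktail_adj (card V) (f z) (f a)" using a b n4 unfolding cocktail_adj_def by auto
    then show "\<exists>u\<in>{a, b}. E z u" using f(2) z a by blast
  qed
  then have le: "gamma V E \<le> card {a, b}" by (rule gamma_le[OF finV])
  have "card {a, b} \<le> 2" by (cases "a = b") auto
  then have "gamma V E \<le> 2" using le by simp
  moreover have "gamma V E \<noteq> 1"
  proof
    assume "gamma V E = 1"
    then have "card V = 2" using K2_gamma1 gamma1_K2 by blast
    then show False using n4 by simp
  qed
  ultimately show ?thesis using g_pos by simp
qed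

end



context hu begin

definition dompair :: "'a \<Rightarrow> 'a \<Rightarrow> 'a \<Rightarrow> bool" where
  "dompair u c d \<longleftrightarrow> c \<noteq> d \<and> c \<in> V - {u} \<and> d \<in> V - {u} \<and> (\<forall>z\<in>V - {u, c, d}. E z c \<or> E z d)"

lemma dompair_sym: "dompair u c d \<Longrightarrow> dompair u d c"
  unfolding dompair_def by (auto simp: insert_commute)

lemma tight:
  assumes n7: "card V = 7" and g3: "gamma V E = 3" and uV: "u \<in> V"
  shows "\<exists>a b. dompair u a b \<and> (\<forall>c d. dompair u c d \<longrightarrow> {c, d} = {a, b}) \<and> \<not> E u a \<and> \<not> E u b \<and>
     (\<forall>z\<in>V - {u, a, b}. E z a \<longleftrightarrow> \<not> E z b) \<and>
     card {z \<in> V - {u, a, b}. E z a} = 2 \<and> card {z \<in> V - {u, a, b}. E z b} = 2"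
proof -
  have n3: "3 \<le> card V" using n7 by simp
  have fin: "finite (V - {u})" using finV by simp
  obtain Du where Du: "gamma_set (V - {u}) E Du" using exDx[OF uV] by blast
  have gu: "gamma (V - {u}) E = 2" using Lmain[OF n3 uV] g3 by simp
  have cDu: "card Du = 2" using gamma_set_card[OF Du] gu by simp
  then obtain a b where ab: "a \<noteq> b" and Dab: "Du = {a, b}" by (auto simp: card_2_iff)
  have DuV: "Du \<subseteq> V - {u}" by (rule gamma_set_subset[OF Du])
  have dDu: "dominating (V - {u}) E Du" by (rule gamma_set_dom[OF Du])
  have aV: "a \<in> V - {u}" "b \<in> V - {u}" using DuV Dab by auto
  have dp: "dompair u a b"
    unfolding dompair_def
  proof (intro conjI ballI)
    show "a \<noteq> b" "a \<in> V - {u}" "b \<in> V - {u}" using ab aV by auto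
  next
    fix z assume z: "z \<in> V - {u, a, b}"
    then have "z \<in> V - {u} - Du" using Dab by blast
    then obtain w where "w \<in> Du" "E z w" using dDu unfolding dominating_def by blast
    then show "E z a \<or> E z b" using Dab by blast
  qed
  have un: "\<forall>D'. gamma_set (V - {u}) E D' \<longrightarrow> D' = Du" using uniq_eq[OF uV _ Du] by blast
  have unp: "\<forall>c d. dompair u c d \<longrightarrow> {c, d} = {a, b}"
  proof (intro allI impI)
    fix c d assume cd: "dompair u c d"
    have "dominating (V - {u}) E {c, d}" using cd unfolding dompair_def dominating_def by blast
    moreover have "card {c, d} \<le> gamma (V - {u}) E" using gu by (cases "c = d") auto
    ultimately have "gamma_set (V - {u}) E {c, d}" by (rule gamma_setI[OF fin])
    then show "{c, d} = {a, b}" using un Dab by blast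
  qed
  have nu: "\<not> E u c" if c: "c \<in> {a, b}" for c
  proof
    assume uc: "E u c"
    have "dominating V E {a, b}"
      unfolding dominating_def
    proof (intro conjI ballI)
      show "{a, b} \<subseteq> V" using aV by blast
    next
      fix z assume z: "z \<in> V - {a, b}"
      show "\<exists>w\<in>{a, b}. E z w"
      proof (cases "z = u")
        case True then show ?thesis using uc c by blast
      next
        case False then have "z \<in> V - {u, a, b}" using z by blast
        then show ?thesis using dp unfolding dompair_def by blast
      qed
    qed
    then have "gamma V E \<le> card {a, b}" by (rule gamma_le[OF finV])
    then show False using g3 ab by simp
  qed
  have ni: "\<forall>z\<in>V - {u}. \<exists>y\<in>V - {u}. E z y"
  proof
    fix z assume z: "z \<in> V - {u}"
    obtain y1 y2 where "y1 \<noteq> y2" "E z y1" "E z y2" using two_nbrs[OF n3] z by blast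
    then show "\<exists>y\<in>V - {u}. E z y" using edgeV by blast
  qed
  define Pa where "Pa = epn (V - {u}) E Du a"
  define Pb where "Pb = epn (V - {u}) E Du b"
  have c2a: "2 \<le> card Pa" unfolding Pa_def by (rule epn2[OF fin symE' irrE' ni Du un]) (simp add: Dab)
  have c2b: "2 \<le> card Pb" unfolding Pb_def by (rule epn2[OF fin symE' irrE' ni Du un]) (simp add: Dab)
  have Pae: "Pa = {z \<in> V - {u, a, b}. E z a \<and> \<not> E z b}" unfolding Pa_def epn_def Dab using ab by auto
  have Pbe: "Pb = {z \<in> V - {u, a, b}. E z b \<and> \<not> E z a}" unfolding Pb_def epn_def Dab using ab by auto
  have disj: "Pa \<inter> Pb = {}" using Pae Pbe by blast
  have sub: "Pa \<union> Pb \<subseteq> V - {u, a, b}" using Pae Pbe by blast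
  have finR: "finite (V - {u, a, b})" using finV by simp
  have c4: "card (V - {u, a, b}) = 4"
  proof -
    have s: "{u, a, b} \<subseteq> V" using uV aV by blast
    have "card {u, a, b} = 3" using ab aV by auto
    then show ?thesis using n7 card_Diff_subset[OF _ s] by simp
  qed
  have finP: "finite Pa" "finite Pb" using finite_subset[OF sub finR] by auto
  have cU: "card (Pa \<union> Pb) = card Pa + card Pb" using disj finP by (simp add: card_Un_disjoint)
  have "card (Pa \<union> Pb) \<le> 4" using card_mono[OF finR sub] c4 by simp
  then have ca: "card Pa = 2" "card Pb = 2" using c2a c2b cU by linarith+
  have eqU: "Pa \<union> Pb = V - {u, a, b}" using card_subset_eq[OF finR sub] cU ca c4 by simp
  have exact: "\<forall>z\<in>V - {u, a, b}. E z a \<longleftrightarrow> \<not> E z b"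
  proof
    fix z assume "z \<in> V - {u, a, b}"
    then have "z \<in> Pa \<union> Pb" using eqU by blast
    then show "E z a \<longleftrightarrow> \<not> E z b" using Pae Pbe by blast
  qed
  have "{z \<in> V - {u, a, b}. E z a} = Pa" using Pae exact by blast
  moreover have "{z \<in> V - {u, a, b}. E z b} = Pb" using Pbe exact by blast
  ultimately have cc: "card {z \<in> V - {u, a, b}. E z a} = 2" "card {z \<in> V - {u, a, b}. E z b} = 2"
    using ca by simp_all
  have n2: "\<not> E u a" "\<not> E u b" using nu by blast+
  show ?thesis
    by (rule exI[of _ a], rule exI[of _ b]) (intro conjI dp unp n2 exact cc)
qed

lemma pair_uniq:
  assumes n7: "card V = 7" and g3: "gamma V E = 3" and uV: "u \<in> V"
    and d1: "dompair u a b" and d2: "dompair u c d"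
  shows "{c, d} = {a, b}"
proof -
  obtain a0 b0 where "\<forall>c d. dompair u c d \<longrightarrow> {c, d} = {a0, b0}" using tight[OF n7 g3 uV] by blast
  then show ?thesis using d1 d2 by metis
qed

lemma exact_dp:
  assumes n7: "card V = 7" and g3: "gamma V E = 3" and uV: "u \<in> V" and dp: "dompair u c d"
  shows "\<not> E u c \<and> \<not> E u d \<and> (\<forall>z\<in>V - {u, c, d}. E z c \<longleftrightarrow> \<not> E z d)"
proof -
  obtain a0 b0 where T: "\<forall>c d. dompair u c d \<longrightarrow> {c, d} = {a0, b0}" "\<not> E u a0" "\<not> E u b0"
    "\<forall>z\<in>V - {u, a0, b0}. E z a0 \<longleftrightarrow> \<not> E z b0" using tight[OF n7 g3 uV] by blast
  have "{c, d} = {a0, b0}" using T(1) dp by blast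
  moreover have "c \<noteq> d" using dp unfolding dompair_def by blast
  ultimately have "(c = a0 \<and> d = b0) \<or> (c = b0 \<and> d = a0)" by (metis doubleton_eq_iff)
  then show ?thesis
  proof
    assume "c = a0 \<and> d = b0" then show ?thesis using T by blast
  next
    assume cd: "c = b0 \<and> d = a0"
    have "V - {u, c, d} = V - {u, a0, b0}" using cd by auto
    then show ?thesis using T cd by auto
  qed
qed

end



context hu begin

lemma t1:
  assumes n7: "card V = 7" and g3: "gamma V E = 3" and uV: "u \<in> V"
    and dp: "dompair u a b"
    and ex: "\<forall>z\<in>V - {u, a, b}. E z a \<longleftrightarrow> \<not> E z b"
    and ca: "card {z \<in> V - {u, a, b}. E z a} = 2" and cb: "card {z \<in> V - {u, a, b}. E z b} = 2"
    and p: "p1 \<noteq> p2" "p1 \<in> V - {u, a, b}" "p2 \<in> V - {u, a, b}" "E p1 a" "E p2 a" "E u p1" "E u p2"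
  shows False
proof -
  have n3: "3 \<le> card V" using n7 by simp
  have ab: "a \<noteq> b" "a \<in> V" "b \<in> V" "a \<noteq> u" "b \<noteq> u" using dp unfolding dompair_def by auto
  have finR: "finite (V - {u, a, b})" using finV by simp
  have finA: "finite {z \<in> V - {u, a, b}. E z a}" using finR by simp
  have Pa: "{z \<in> V - {u, a, b}. E z a} = {p1, p2}"
  proof -
    have sub: "{p1, p2} \<subseteq> {z \<in> V - {u, a, b}. E z a}" using p by blast
    have "card {p1, p2} = card {z \<in> V - {u, a, b}. E z a}" using p(1) ca by simp
    then show ?thesis using card_subset_eq[OF finA sub] by simp
  qed
  obtain q1 q2 where q: "q1 \<noteq> q2" "{z \<in> V - {u, a, b}. E z b} = {q1, q2}"
    using cb by (auto simp: card_2_iff)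
  have q1in: "q1 \<in> {z \<in> V - {u, a, b}. E z b}" and q2in: "q2 \<in> {z \<in> V - {u, a, b}. E z b}"
    using q(2) by auto
  have qV: "q1 \<in> V - {u, a, b}" "q2 \<in> V - {u, a, b}" "E q1 b" "E q2 b" using q1in q2in by auto
  have qa: "\<not> E q1 a" "\<not> E q2 a" using ex qV by blast+
  have cover: "z = p1 \<or> z = p2 \<or> z = q1 \<or> z = q2" if z: "z \<in> V - {u, a, b}" for z
  proof (cases "E z a")
    case True then have "z \<in> {z \<in> V - {u, a, b}. E z a}" using z by blast
    then show ?thesis using Pa by blast
  next
    case False then have "E z b" using ex z by blast
    then have "z \<in> {z \<in> V - {u, a, b}. E z b}" using z by blast
    then show ?thesis using q(2) by blast
  qed
  have dpa: "dompair a u b"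
    unfolding dompair_def
  proof (intro conjI ballI)
    show "u \<noteq> b" "u \<in> V - {a}" "b \<in> V - {a}" using ab uV by auto
  next
    fix z assume z: "z \<in> V - {a, u, b}"
    then have z': "z \<in> V - {u, a, b}" by blast
    show "E z u \<or> E z b"
    proof (cases "E z a")
      case True then have "z = p1 \<or> z = p2" using Pa z' by blast
      moreover have "E p1 u" "E p2 u" using p(6,7) symE by blast+
      ultimately show ?thesis by blast
    next
      case False then show ?thesis using ex z' by blast
    qed
  qed
  have exa: "\<forall>z\<in>V - {a, u, b}. E z u \<longleftrightarrow> \<not> E z b" using exact_dp[OF n7 g3 ab(2) dpa] by blast
  have qu: "\<not> E q1 u" "\<not> E q2 u"
  proof -
    have "q1 \<in> V - {a, u, b}" "q2 \<in> V - {a, u, b}" using qV by auto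
    then show "\<not> E q1 u" "\<not> E q2 u" using exa qV(3,4) by blast+
  qed
  have qq: "\<not> E q1 q2"
  proof
    assume e: "E q1 q2"
    have "dompair u a q1"
      unfolding dompair_def
    proof (intro conjI ballI)
      show "a \<noteq> q1" "a \<in> V - {u}" "q1 \<in> V - {u}" using qV ab by auto
    next
      fix z assume z: "z \<in> V - {u, a, q1}"
      show "E z a \<or> E z q1"
      proof (cases "z = b")
        case True
        have "E b q1" using qV(3) symE by blast
        then show ?thesis using True by blast
      next
        case False
        then have "z \<in> V - {u, a, b}" using z by blast
        then have "z = p1 \<or> z = p2 \<or> z = q2" using cover z by blast
        moreover have "E q2 q1" using e symE by blast
        ultimately show ?thesis using p(4,5) by blast
      qed
    qed
    then have "{a, q1} = {a, b}" using pair_uniq[OF n7 g3 uV dp] by blast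
    moreover have "q1 \<noteq> a" using qV by blast
    ultimately have "q1 = b" by (metis doubleton_eq_iff)
    then show False using qV by blast
  qed
  have qq': "\<not> E q2 q1" using qq symE by blast
  have qp: "E q p1 \<or> E q p2" if qin: "q = q1 \<or> q = q2" for q
  proof -
    have qV': "q \<in> V" using qin qV by blast
    obtain y1 y2 where y: "y1 \<noteq> y2" "E q y1" "E q y2" using two_nbrs[OF n3 qV'] by blast
    have nb: "y = b \<or> y = p1 \<or> y = p2" if ey: "E q y" for y
    proof -
      have yV: "y \<in> V" using ey edgeV by blast
      have "y \<noteq> q" using ey irrE by blast
      moreover have "y \<noteq> u" using ey qu qin by blast
      moreover have "y \<noteq> a" using ey qa qin by blast
      moreover have "y \<noteq> q1 \<and> y \<noteq> q2" using ey qq qq' qin \<open>y \<noteq> q\<close> by blast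
      ultimately show ?thesis using cover yV by blast
    qed
    show ?thesis using nb[OF y(2)] nb[OF y(3)] y by blast
  qed
  have dpb: "dompair b p1 p2"
    unfolding dompair_def
  proof (intro conjI ballI)
    show "p1 \<noteq> p2" "p1 \<in> V - {b}" "p2 \<in> V - {b}" using p by auto
  next
    fix z assume z: "z \<in> V - {b, p1, p2}"
    show "E z p1 \<or> E z p2"
    proof (cases "z = u")
      case True then show ?thesis using p(6) by blast
    next
      case zu: False
      show ?thesis
      proof (cases "z = a")
        case True
        have "E a p1" using p(4) symE by blast
        then show ?thesis using True by blast
      next
        case False
        then have "z \<in> V - {u, a, b}" using z zu by blast
        then have "z = q1 \<or> z = q2" using cover z by blast
        then show ?thesis using qp by blast
      qed
    qed
  qed
  have "\<forall>z\<in>V - {b, p1, p2}. E z p1 \<longleftrightarrow> \<not> E z p2" using exact_dp[OF n7 g3 ab(3) dpb] by blast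
  moreover have "u \<in> V - {b, p1, p2}" using uV ab p by blast
  ultimately show False using p(6,7) by blast
qed

lemma local_struct:
  assumes n7: "card V = 7" and g3: "gamma V E = 3" and uV: "u \<in> V"
  shows "\<exists>a b p1 p2 q1 q2. distinct [u, a, b, p1, p2, q1, q2] \<and> V = {u, a, b, p1, p2, q1, q2} \<and>
     E p1 a \<and> E p2 a \<and> E q1 b \<and> E q2 b \<and> \<not> E p1 b \<and> \<not> E p2 b \<and> \<not> E q1 a \<and> \<not> E q2 a \<and>
     \<not> E u a \<and> \<not> E u b \<and> E u p1 \<and> \<not> E u p2 \<and> E u q1 \<and> \<not> E u q2"
proof -
  have n3: "3 \<le> card V" using n7 by simp
  obtain a b where T: "dompair u a b" "\<not> E u a" "\<not> E u b" "\<forall>z\<in>V - {u, a, b}. E z a \<longleftrightarrow> \<not> E z b"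
    "card {z \<in> V - {u, a, b}. E z a} = 2" "card {z \<in> V - {u, a, b}. E z b} = 2"
    using tight[OF n7 g3 uV] by blast
  have ab: "a \<noteq> b" "a \<in> V" "b \<in> V" "a \<noteq> u" "b \<noteq> u" using T(1) unfolding dompair_def by auto
  define Pa where "Pa = {z \<in> V - {u, a, b}. E z a}"
  define Pb where "Pb = {z \<in> V - {u, a, b}. E z b}"
  define N where "N = {w. E u w}"
  have finR: "finite (V - {u, a, b})" using finV by simp
  have finPa: "finite Pa" and finPb: "finite Pb" unfolding Pa_def Pb_def using finR by simp_all
  have finN: "finite N"
  proof -
    have "N \<subseteq> V" unfolding N_def using edgeV by blast
    then show ?thesis using finV by (rule finite_subset)
  qed
  have Nsub: "N \<subseteq> Pa \<union> Pb"
  proof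
    fix w assume w: "w \<in> N"
    then have "E u w" unfolding N_def by blast
    then have "w \<in> V" "w \<noteq> u" "w \<noteq> a" "w \<noteq> b" using edgeV irrE T(2,3) by blast+
    then show "w \<in> Pa \<union> Pb" using \<open>E u w\<close> T(4) symE unfolding Pa_def Pb_def by blast
  qed
  have dpba: "dompair u b a" by (rule dompair_sym[OF T(1)])
  have sw: "V - {u, b, a} = V - {u, a, b}" by (auto simp: insert_commute)
  have exba: "\<forall>z\<in>V - {u, b, a}. E z b \<longleftrightarrow> \<not> E z a" using T(4) sw by auto
  have cba: "card {z \<in> V - {u, b, a}. E z b} = 2" "card {z \<in> V - {u, b, a}. E z a} = 2" using T(5,6) sw by simp_all
  have Na1: "card (N \<inter> Pa) \<le> 1"
  proof -
    have "\<forall>x\<in>N \<inter> Pa. \<forall>y\<in>N \<inter> Pa. x = y"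
    proof (intro ballI)
      fix x y assume x: "x \<in> N \<inter> Pa" and y: "y \<in> N \<inter> Pa"
      show "x = y"
      proof (rule ccontr)
        assume "x \<noteq> y"
        have "x \<in> V - {u, a, b}" "y \<in> V - {u, a, b}" "E x a" "E y a" "E u x" "E u y"
          using x y unfolding N_def Pa_def by auto
        then show False using t1[OF n7 g3 uV T(1) T(4) T(5) T(6) \<open>x \<noteq> y\<close>] by blast
      qed
    qed
    then show ?thesis using card_le_Suc0_iff_eq[of "N \<inter> Pa"] finN by simp
  qed
  have Nb1: "card (N \<inter> Pb) \<le> 1"
  proof -
    have "\<forall>x\<in>N \<inter> Pb. \<forall>y\<in>N \<inter> Pb. x = y"
    proof (intro ballI)
      fix x y assume x: "x \<in> N \<inter> Pb" and y: "y \<in> N \<inter> Pb"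
      show "x = y"
      proof (rule ccontr)
        assume "x \<noteq> y"
        have "x \<in> V - {u, b, a}" "y \<in> V - {u, b, a}" "E x b" "E y b" "E u x" "E u y"
          using x y sw unfolding N_def Pb_def by auto
        then show False using t1[OF n7 g3 uV dpba exba cba(1) cba(2) \<open>x \<noteq> y\<close>] by blast
      qed
    qed
    then show ?thesis using card_le_Suc0_iff_eq[of "N \<inter> Pb"] finN by simp
  qed
  have cN: "2 \<le> card N"
  proof -
    obtain y1 y2 where y: "y1 \<noteq> y2" "E u y1" "E u y2" using two_nbrs[OF n3 uV] by blast
    have "{y1, y2} \<subseteq> N" using y unfolding N_def by blast
    then have "card {y1, y2} \<le> card N" by (rule card_mono[OF finN])
    then show ?thesis using y(1) by simp
  qed
  have "N = (N \<inter> Pa) \<union> (N \<inter> Pb)" using Nsub by blast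
  then have "card N \<le> card (N \<inter> Pa) + card (N \<inter> Pb)" by (metis card_Un_le)
  then have c1: "card (N \<inter> Pa) = 1" "card (N \<inter> Pb) = 1" using Na1 Nb1 cN by linarith+
  obtain p1 where p1: "N \<inter> Pa = {p1}" using c1(1) card_1_singletonE by blast
  obtain q1 where q1: "N \<inter> Pb = {q1}" using c1(2) card_1_singletonE by blast
  have p1P: "p1 \<in> Pa" "E u p1" using p1 unfolding N_def by auto
  have q1P: "q1 \<in> Pb" "E u q1" using q1 unfolding N_def by auto
  have "card (Pa - {p1}) = 1" using T(5) p1P finPa unfolding Pa_def by simp
  then obtain p2 where p2: "Pa - {p1} = {p2}" using card_1_singletonE by blast
  have "card (Pb - {q1}) = 1" using T(6) q1P finPb unfolding Pb_def by simp
  then obtain q2 where q2: "Pb - {q1} = {q2}" using card_1_singletonE by blast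
  have Paeq: "Pa = {p1, p2}" using p2 p1P by blast
  have Pbeq: "Pb = {q1, q2}" using q2 q1P by blast
  have p12: "p1 \<noteq> p2" using p2 by blast
  have q12: "q1 \<noteq> q2" using q2 by blast
  have pin: "p1 \<in> V - {u, a, b}" "p2 \<in> V - {u, a, b}" "E p1 a" "E p2 a"
    using Paeq unfolding Pa_def by blast+
  have qin: "q1 \<in> V - {u, a, b}" "q2 \<in> V - {u, a, b}" "E q1 b" "E q2 b"
    using Pbeq unfolding Pb_def by blast+
  have pb: "\<not> E p1 b" "\<not> E p2 b" using T(4) pin by blast+
  have qa: "\<not> E q1 a" "\<not> E q2 a" using T(4) qin by blast+
  have up2: "\<not> E u p2"
  proof
    assume "E u p2"
    then have "p2 \<in> N \<inter> Pa" using Paeq unfolding N_def by blast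
    then show False using p1 p12 by auto
  qed
  have uq2: "\<not> E u q2"
  proof
    assume "E u q2"
    then have "q2 \<in> N \<inter> Pb" using Pbeq unfolding N_def by blast
    then show False using q1 q12 by auto
  qed
  have pq: "p1 \<noteq> q1" "p1 \<noteq> q2" "p2 \<noteq> q1" "p2 \<noteq> q2" using pin qa by blast+
  have Veq: "V = {u, a, b, p1, p2, q1, q2}"
  proof
    show "V \<subseteq> {u, a, b, p1, p2, q1, q2}"
    proof
      fix z assume z: "z \<in> V"
      show "z \<in> {u, a, b, p1, p2, q1, q2}"
      proof (cases "z \<in> {u, a, b}")
        case True then show ?thesis by blast
      next
        case False
        then have zr: "z \<in> V - {u, a, b}" using z by blast
        then have "z \<in> Pa \<or> z \<in> Pb" using T(4) unfolding Pa_def Pb_def by blast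
        then show ?thesis using Paeq Pbeq by blast
      qed
    qed
  next
    show "{u, a, b, p1, p2, q1, q2} \<subseteq> V" using uV ab pin qin by blast
  qed
  have dist: "distinct [u, a, b, p1, p2, q1, q2]" using ab pin qin p12 q12 pq by auto
  show ?thesis
    by (rule exI[of _ a], rule exI[of _ b], rule exI[of _ p1], rule exI[of _ p2], rule exI[of _ q1],
        rule exI[of _ q2]) (intro conjI dist Veq pin(3,4) qin(3,4) pb qa T(2,3) p1P(2) up2 q1P(2) uq2)
qed

end



lemma iso_card: "graph_iso V E {0..<m} F \<Longrightarrow> card V = m"
  unfolding graph_iso_def using bij_betw_same_card by fastforce

context hu begin

lemma deg2:
  assumes n7: "card V = 7" and g3: "gamma V E = 3" and xV: "x \<in> V"
  shows "card {w. E x w} = 2"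
proof -
  obtain a b p1 p2 q1 q2 where D: "distinct [x, a, b, p1, p2, q1, q2]" and Veq: "V = {x, a, b, p1, p2, q1, q2}"
    and ev: "\<not> E x a" "\<not> E x b" "E x p1" "\<not> E x p2" "E x q1" "\<not> E x q2"
    using local_struct[OF n7 g3 xV] by blast
  have "{w. E x w} = {p1, q1}"
  proof
    show "{w. E x w} \<subseteq> {p1, q1}"
    proof
      fix w assume "w \<in> {w. E x w}"
      then have e: "E x w" by simp
      have "w \<in> V" using e edgeV by blast
      then have "w \<in> {x, a, b, p1, p2, q1, q2}" using Veq by simp
      moreover have "w \<noteq> x" using e irrE by blast
      moreover have "w \<noteq> a" "w \<noteq> b" "w \<noteq> p2" "w \<noteq> q2" using e ev by blast+
      ultimately show "w \<in> {p1, q1}" by blast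
    qed
    show "{p1, q1} \<subseteq> {w. E x w}" using ev by blast
  qed
  then show ?thesis using D by simp
qed

lemma c7:
  assumes n7: "card V = 7" and g3: "gamma V E = 3"
  shows "graph_iso V E {0..<7} (cycle_adj 7)"
proof -
  have "V \<noteq> {}" using n7 by auto
  then obtain v where vV: "v \<in> V" by blast
  obtain a b p1 p2 q1 q2 where D: "distinct [v, a, b, p1, p2, q1, q2]" and Veq: "V = {v, a, b, p1, p2, q1, q2}"
    and e: "E p1 a" "E p2 a" "E q1 b" "E q2 b" and ne: "\<not> E p1 b" "\<not> E p2 b" "\<not> E q1 a" "\<not> E q2 a"
    and ev: "\<not> E v a" "\<not> E v b" "E v p1" "\<not> E v p2" "E v q1" "\<not> E v q2"
    using local_struct[OF n7 g3 vV] by blast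
  have finN: "finite {w. E x w}" for x
  proof -
    have "{w. E x w} \<subseteq> V" using edgeV by blast
    then show ?thesis using finV by (rule finite_subset)
  qed
  have two: "{w. E x w} = {s, t}" if "x \<in> V" "s \<noteq> t" "E x s" "E x t" for x s t
  proof -
    have sub: "{s, t} \<subseteq> {w. E x w}" using that by blast
    have "card {s, t} = card {w. E x w}" using deg2[OF n7 g3 that(1)] that(2) by simp
    then show ?thesis using card_subset_eq[OF finN sub] by simp
  qed
  have inV: "v \<in> V" "a \<in> V" "b \<in> V" "p1 \<in> V" "p2 \<in> V" "q1 \<in> V" "q2 \<in> V" using Veq by auto
  have dd: "v \<noteq> a" "v \<noteq> b" "v \<noteq> p1" "v \<noteq> p2" "v \<noteq> q1" "v \<noteq> q2" "a \<noteq> b" "a \<noteq> p1" "a \<noteq> p2"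
    "a \<noteq> q1" "a \<noteq> q2" "b \<noteq> p1" "b \<noteq> p2" "b \<noteq> q1" "b \<noteq> q2" "p1 \<noteq> p2" "p1 \<noteq> q1" "p1 \<noteq> q2"
    "p2 \<noteq> q1" "p2 \<noteq> q2" "q1 \<noteq> q2" using D by auto
  have Nv: "{w. E v w} = {p1, q1}" by (rule two) (use inV dd ev in auto)
  have Na: "{w. E a w} = {p1, p2}" by (rule two) (use inV dd e symE in auto)
  have Nb: "{w. E b w} = {q1, q2}" by (rule two) (use inV dd e symE in auto)
  have Np1: "{w. E p1 w} = {a, v}" by (rule two) (use inV dd e ev symE in auto)
  have Nq1: "{w. E q1 w} = {b, v}" by (rule two) (use inV dd e ev symE in auto)
  obtain x where x: "E p2 x" "x \<noteq> a"
  proof -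
    have "\<not> {w. E p2 w} \<subseteq> {a}"
    proof
      assume "{w. E p2 w} \<subseteq> {a}"
      then have "card {w. E p2 w} \<le> card {a}" by (rule card_mono[rotated]) simp
      then show False using deg2[OF n7 g3 inV(5)] by simp
    qed
    then show ?thesis using that by blast
  qed
  have xq2: "x = q2"
  proof -
    have "x \<in> V" using x(1) edgeV by blast
    then have "x \<in> {v, a, b, p1, p2, q1, q2}" using Veq by simp
    moreover have "x \<noteq> v" using x(1) ev(4) symE by blast
    moreover have "x \<noteq> b" using x(1) ne(2) by blast
    moreover have "x \<noteq> p2" using x(1) irrE by blast
    moreover have "x \<noteq> p1"
    proof
      assume "x = p1"
      then have "E p1 p2" using x(1) symE by blast
      then have "p2 \<in> {a, v}" using Np1 by blast
      then show False using dd by blast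
    qed
    moreover have "x \<noteq> q1"
    proof
      assume "x = q1"
      then have "E q1 p2" using x(1) symE by blast
      then have "p2 \<in> {b, v}" using Nq1 by blast
      then show False using dd by blast
    qed
    ultimately show ?thesis using x(2) by blast
  qed
  have Np2: "{w. E p2 w} = {a, q2}" by (rule two) (use inV dd e x xq2 symE in auto)
  have Nq2: "{w. E q2 w} = {b, p2}" by (rule two) (use inV dd e x xq2 symE in auto)
  have Ev: "E v y \<longleftrightarrow> y = p1 \<or> y = q1" for y using Nv by blast
  have Ea: "E a y \<longleftrightarrow> y = p1 \<or> y = p2" for y using Na by blast
  have Eb: "E b y \<longleftrightarrow> y = q1 \<or> y = q2" for y using Nb by blast
  have Ep1: "E p1 y \<longleftrightarrow> y = a \<or> y = v" for y using Np1 by blast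
  have Eq1: "E q1 y \<longleftrightarrow> y = b \<or> y = v" for y using Nq1 by blast
  have Ep2: "E p2 y \<longleftrightarrow> y = a \<or> y = q2" for y using Np2 by blast
  have Eq2: "E q2 y \<longleftrightarrow> y = b \<or> y = p2" for y using Nq2 by blast
  show ?thesis
  proof (rule list_iso[where xs = "[v, p1, a, p2, q2, b, q1]"])
    show "distinct [v, p1, a, p2, q2, b, q1]" using D by auto
    show "set [v, p1, a, p2, q2, b, q1] = V" using Veq by auto
    show "length [v, p1, a, p2, q2, b, q1] = 7" by simp
    show "\<forall>i<7. \<forall>j<7. E ([v, p1, a, p2, q2, b, q1] ! i) ([v, p1, a, p2, q2, b, q1] ! j) \<longleftrightarrow> cycle_adj 7 i j"
      unfolding all_less_7 using dd by (simp add: Ev Ea Eb Ep1 Eq1 Ep2 Eq2 cycle_adj_def)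
  qed
qed

end

theorem proposition3p5:
  fixes V :: "'a set" and E :: "'a \<Rightarrow> 'a \<Rightarrow> bool" and n :: nat
  assumes "graph V E" and "hypo_unique V E" and "n = card V"
  shows "1 \<le> gamma V E \<and> gamma V E \<le> (2 * n) div 5 + 1
    \<and> (gamma V E = 1 \<longleftrightarrow> graph_iso V E {0..<2} (complete_adj 2))
    \<and> (gamma V E = 2 \<longleftrightarrow> n \<ge> 4 \<and> even n \<and> graph_iso V E {0..<n} (cocktail_adj n))
    \<and> (gamma V E = (2 * n) div 5 + 1 \<longleftrightarrow>
         graph_iso V E {0..<2} (complete_adj 2) \<or> graph_iso V E {0..<4} (cycle_adj 4)
         \<or> graph_iso V E {0..<7} (cycle_adj 7))"
proof -
  interpret hu V E using assms(1,2) by unfold_locales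
  have g1: "1 \<le> gamma V E" by (rule g_pos)
  have glt: "gamma V E < card V" by (rule g_lt)
  have b3: "3 * gamma V E \<le> card V + 2"
  proof (cases "3 \<le> card V")
    case True then show ?thesis by (rule bound3)
  next
    case False then show ?thesis using g1 glt by linarith
  qed
  have arith1: "\<And>g m::nat. 3 * g \<le> m + 2 \<Longrightarrow> g \<le> (2 * m) div 5 + 1" by presburger
  have bnd: "gamma V E \<le> (2 * n) div 5 + 1" using arith1[OF b3] assms(3) by simp
  have i: "gamma V E = 1 \<longleftrightarrow> graph_iso V E {0..<2} (complete_adj 2)"
    using gamma1_K2 K2_gamma1 by blast
  have ii: "gamma V E = 2 \<longleftrightarrow> (n \<ge> 4 \<and> even n \<and> graph_iso V E {0..<n} (cocktail_adj n))"
    using gamma2_cocktail cocktail_gamma2 assms(3) by blast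
  have arith2: "\<And>g m::nat. 3 * g \<le> m + 2 \<Longrightarrow> 1 \<le> g \<Longrightarrow> g < m \<Longrightarrow> g = (2 * m) div 5 + 1 \<Longrightarrow>
      (m = 2 \<and> g = 1) \<or> (m = 4 \<and> g = 2) \<or> (m = 7 \<and> g = 3)" by presburger
  have iii: "gamma V E = (2 * n) div 5 + 1 \<longleftrightarrow>
         graph_iso V E {0..<2} (complete_adj 2) \<or> graph_iso V E {0..<4} (cycle_adj 4)
         \<or> graph_iso V E {0..<7} (cycle_adj 7)"
  proof
    assume eq: "gamma V E = (2 * n) div 5 + 1"
    have "(card V = 2 \<and> gamma V E = 1) \<or> (card V = 4 \<and> gamma V E = 2) \<or> (card V = 7 \<and> gamma V E = 3)"
      using arith2[OF b3 g1 glt] eq assms(3) by simp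
    then show "graph_iso V E {0..<2} (complete_adj 2) \<or> graph_iso V E {0..<4} (cycle_adj 4)
         \<or> graph_iso V E {0..<7} (cycle_adj 7)"
    proof (elim disjE conjE)
      assume "gamma V E = 1" then show ?thesis using i by blast
    next
      assume c4: "card V = 4" and g2: "gamma V E = 2"
      have "graph_iso V E {0..<4} (cocktail_adj 4)" using gamma2_cocktail[OF g2] c4 by simp
      then have "graph_iso V E {0..<4} (cycle_adj 4)" using iso_trans cocktail4_cycle4 by blast
      then show ?thesis by blast
    next
      assume "card V = 7" "gamma V E = 3"
      then show ?thesis using c7 by blast
    qed
  next
    assume isos: "graph_iso V E {0..<2} (complete_adj 2) \<or> graph_iso V E {0..<4} (cycle_adj 4)
         \<or> graph_iso V E {0..<7} (cycle_adj 7)"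
    have no1: "gamma V E \<noteq> 1" if "card V \<noteq> 2"
      using that K2_gamma1 gamma1_K2 by blast
    show "gamma V E = (2 * n) div 5 + 1"
      using isos
    proof (elim disjE)
      assume "graph_iso V E {0..<2} (complete_adj 2)"
      then show ?thesis using K2_gamma1 assms(3) by simp
    next
      assume "graph_iso V E {0..<4} (cycle_adj 4)"
      then have c: "card V = 4" by (rule iso_card)
      then have "gamma V E \<le> 2" using b3 by simp
      then have "gamma V E = 2" using no1 c g1 by simp
      then show ?thesis using c assms(3) by simp
    next
      assume "graph_iso V E {0..<7} (cycle_adj 7)"
      then have c: "card V = 7" by (rule iso_card)
      then have "gamma V E \<le> 3" using b3 by simp
      moreover have "gamma V E \<noteq> 2" using gamma2_cocktail c by fastforce
      ultimately have "gamma V E = 3" using no1 c g1 by simp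
      then show ?thesis using c assms(3) by simp
    qed
  qed
  show ?thesis using g1 bnd i ii iii by blast
qed


end
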